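(* Let $R$ be a noncommutative division algebra over a field $F$, let $n\geq 2$ be an integer, and let $p\in F[x]$ be a nonconstant polynomial. Then there exist $A,B\in\mathrm{M}_n(R)$ such that $\mathrm{trace}\big(p(AB)-p(BA)\big)\neq 0$.
   Context: For a matrix $X\in \mathrm{M}_n(R)$, $\mathrm{trace}(X)$ denotes the sum of its diagonal entries (an element of $R$). *)

theory Defs
  imports "HOL-Computational_Algebra.Polynomial" "Jordan_Normal_Form.Matrix"
begin

definition mat_trace :: "'a::comm_monoid_add mat \<Rightarrow> 'a" where
  "mat_trace A = (\<Sum>i<dim_row A. A $$ (i, i))"

text \<open>An F-algebra structure on the ring R: a unital ring homomorphism
  phi from F into the centre of R.\<close>
definition is_algebra_map :: "('f::field \<Rightarrow> 'r::ring_1) \<Rightarrow> bool" where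
  "is_algebra_map \<phi> \<longleftrightarrow>
     \<phi> 1 = 1 \<and>
     (\<forall>a b. \<phi> (a + b) = \<phi> a + \<phi> b) \<and>
     (\<forall>a b. \<phi> (a * b) = \<phi> a * \<phi> b) \<and>
     (\<forall>a r. \<phi> a * r = r * \<phi> a)"

definition poly_mat :: "('f::field \<Rightarrow> 'r::ring_1) \<Rightarrow> 'f poly \<Rightarrow> 'r mat \<Rightarrow> 'r mat" where
  "poly_mat \<phi> p X =
     foldr (\<lambda>i M. (\<phi> (coeff p i) \<cdot>\<^sub>m (X ^\<^sub>m i)) + M) [0..<Suc (degree p)]
       (0\<^sub>m (dim_row X) (dim_col X))"

end

theory Submission
  imports Defs "HOL-Algebra.Multiplicative_Group" "HOL-Computational_Algebra.Computational_Algebra"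
begin

lemma map_poly_of_int_mult:
  "map_poly (of_int :: int \<Rightarrow> 'a::comm_ring_1) (p * q) = map_poly of_int p * map_poly of_int q"
  by (rule poly_eqI) (simp add: coeff_map_poly coeff_mult)

lemma poly_map_poly_of_int:
  "poly (map_poly (of_int :: int \<Rightarrow> 'a::comm_ring_1) p) (of_int x) = of_int (poly p x)"
  by (induction p) (simp_all add: map_poly_pCons)

lemma cmod_gt_aux:
  fixes r :: complex and q :: real
  assumes "cmod r = 1" "r \<noteq> 1" "q \<ge> 1"
  shows "cmod (of_real q - r) > q - 1"
proof -
  have "Re r < 1"
  proof (rule ccontr)
    assume "\<not> Re r < 1"
    hence "Re r \<ge> 1" by simp
    moreover have "\<bar>Re r\<bar> \<le> 1" using abs_Re_le_cmod[of r] assms(1) by simp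
    ultimately have re: "Re r = 1" by simp
    have "(Re r)^2 + (Im r)^2 = 1" using assms(1) by (simp add: cmod_def)
    hence "Im r = 0" using re by simp
    thus False using re assms(2) by (simp add: complex_eq_iff)
  qed
  have "q - Re r \<le> cmod (of_real q - r)"
    using abs_Re_le_cmod[of "of_real q - r"] by simp
  thus ?thesis using \<open>Re r < 1\<close> by simp
qed

definition Xp :: "nat \<Rightarrow> int poly" where "Xp d = Polynomial.monom 1 d - 1"

lemma poly_Xp: "poly (Xp d) x = x ^ d - 1"
  by (simp add: Xp_def poly_monom)

lemma poly_map_Xp: "poly (map_poly (of_int :: int \<Rightarrow> 'a::comm_ring_1) (Xp d)) x = x ^ d - 1"
proof -
  have "map_poly (of_int :: int \<Rightarrow> 'a) (Xp d) = Polynomial.monom 1 d - 1"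
    by (rule poly_eqI) (simp add: coeff_map_poly Xp_def coeff_monom)
  thus ?thesis by (simp add: poly_monom)
qed

lemma Xp1: "Xp 1 = [:-1, 1:]"
  by (rule poly_eqI) (simp add: coeff_monom Xp_def coeff_pCons split: nat.split)

lemma Xp_dvd: assumes "d dvd n" shows "Xp d dvd Xp n"
proof -
  obtain k where n: "n = d * k" using assms by auto
  have "Xp n = (Polynomial.monom 1 d) ^ k - 1" by (simp add: Xp_def monom_power n)
  also have "\<dots> = (Polynomial.monom 1 d - 1) * (\<Sum>i<k. (Polynomial.monom 1 d) ^ i)" by (rule power_diff_1_eq)
  finally show ?thesis by (simp add: Xp_def)
qed

lemma Xp_nz: "n \<ge> 1 \<Longrightarrow> Xp n \<noteq> 0"
proof
  assume "n \<ge> 1" "Xp n = 0"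
  hence "poly (Xp n) 2 = 0" by simp
  hence "(2::int) ^ n = 1" by (simp add: poly_Xp)
  moreover have "(2::int) ^ n \<ge> 2 ^ 1" using \<open>n \<ge> 1\<close> by (intro power_increasing) auto
  ultimately show False by simp
qed

lemma cis_pow_ne_1:
  fixes d n :: nat
  assumes "0 < d" "d < n"
  shows "(cis (2 * pi / real n)) ^ d \<noteq> 1"
proof
  assume "(cis (2 * pi / real n)) ^ d = 1"
  hence "cis (real d * (2 * pi / n)) = 1" by (simp add: DeMoivre)
  hence "cos (real d * (2 * pi / n)) = 1" by (metis cis.sel(1) one_complex.sel(1))
  then obtain k :: int where k: "real d * (2 * pi / n) = real_of_int k * 2 * pi" using cos_one_2pi_int[THEN iffD1] by blast
  have "real n > 0" using assms by simp
  hence "real d = k * n" using k by (simp add: field_simps)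
  hence "d = k * n" by linarith
  show False
  proof (cases "k \<le> 0")
    case True then have "k * n \<le> 0" by (simp add: mult_nonpos_nonneg)
    thus False using \<open>d = k * n\<close> assms by linarith
  next
    case False then have "k \<ge> 1" by simp
    hence "k * int n \<ge> 1 * int n" by (intro mult_right_mono) auto
    hence "k * n \<ge> n" by simp
    thus False using \<open>d = k * n\<close> assms by linarith
  qed
qed

lemma cyclotomic_bound:
  fixes n :: nat and q :: int
  assumes n2: "n \<ge> 2" and q2: "q \<ge> 2"
  shows "\<exists>P::int. P > q - 1 \<and> P dvd q ^ n - 1 \<and>
           (\<forall>d T. d dvd n \<longrightarrow> d < n \<longrightarrow> T * (q ^ d - 1) = q ^ n - 1 \<longrightarrow> P dvd T)"
proof -
  define Ds where "Ds = {d. d dvd n \<and> d < n}"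
  have finDs: "finite Ds" unfolding Ds_def by auto
  have oneDs: "1 \<in> Ds" unfolding Ds_def using n2 by auto
  define L where "L = Lcm (Xp ` Ds)"
  have "L dvd Xp n" unfolding L_def
    by (rule Lcm_least) (auto simp: Ds_def intro: Xp_dvd)
  then obtain Phi where Phi: "Xp n = L * Phi" by (elim dvdE)
  have XdL: "Xp d dvd L" if "d \<in> Ds" for d
    unfolding L_def using that by (intro dvd_Lcm) auto
  have Xnz: "Xp n \<noteq> 0" using n2 by (intro Xp_nz) auto
  hence Phinz: "Phi \<noteq> 0" and Lnz: "L \<noteq> 0" using Phi by auto
  have divT: "poly Phi q dvd T" if "d dvd n" "d < n" "T * (q ^ d - 1) = q ^ n - 1" for d T
  proof -
    have dDs: "d \<in> Ds" using that by (simp add: Ds_def)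
    obtain R where R: "L = Xp d * R" using XdL[OF dDs] by (elim dvdE)
    have "d > 0" using that n2 by (intro Nat.gr0I) auto
    have "q ^ d \<ge> 2 ^ d" using q2 by (intro power_mono) auto
    moreover have "(2::int) ^ d \<ge> 2 ^ 1" using \<open>d > 0\<close> by (intro power_increasing) auto
    ultimately have qd: "q ^ d - 1 \<noteq> 0" by simp
    have "q ^ n - 1 = (q ^ d - 1) * (poly R q * poly Phi q)"
      using arg_cong[OF Phi, of "\<lambda>p. poly p q"] by (simp add: R poly_Xp)
    hence "T * (q ^ d - 1) = (poly R q * poly Phi q) * (q ^ d - 1)" using that(3) by simp
    hence "T = poly R q * poly Phi q" using qd by simp
    thus ?thesis by simp
  qed
  have divN: "poly Phi q dvd q ^ n - 1"
    using arg_cong[OF Phi, of "\<lambda>p. poly p q"] by (simp add: poly_Xp)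
  have Phi1: "poly Phi 1 \<noteq> 0"
  proof
    assume "poly Phi 1 = 0"
    hence "[:-1, 1:] dvd Phi" using poly_eq_0_iff_dvd[of Phi 1] by simp
    moreover have "[:-1, 1:] dvd L" using XdL[OF oneDs] by (metis Xp1)
    ultimately have "[:-1, 1:] * [:-1,1:] dvd L * Phi" by (metis mult_dvd_mono mult.commute)
    hence "[:-1, 1:] * [:-1,1:] dvd Xp n" using Phi by simp
    then obtain g where g: "Xp n = [:-1, 1:] * [:-1,1:] * g" by (elim dvdE)
    have "pderiv (Xp n) = [:-1, 1:] * ([:-1,1:] * pderiv g + g * (pderiv [:-1, 1:] + pderiv [:-1, 1:]))"
      unfolding g pderiv_mult by (simp only: algebra_simps)
    hence "poly (pderiv (Xp n)) 1 = 0" by simp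
    moreover have "pderiv (Xp n) = Polynomial.monom (of_nat n) (n - 1)"
      by (simp add: Xp_def pderiv_diff pderiv_monom)
    ultimately show False using n2 by (simp add: poly_monom)
  qed
  have degPhi: "degree Phi \<ge> 1"
  proof (rule ccontr)
    assume "\<not> degree Phi \<ge> 1"
    then obtain c where c: "Phi = [:c:]" by (metis degree_eq_zeroE less_one not_le)
    define z where "z = cis (2 * pi / real n)"
    have "L dvd (\<Prod>d\<in>Ds. Xp d)" unfolding L_def
      by (rule Lcm_least) (auto intro: dvd_prodI finDs)
    then obtain M where M: "(\<Prod>d\<in>Ds. Xp d) = L * M" by (elim dvdE)
    have zn: "z ^ n = 1" unfolding z_def using n2
      by (simp add: DeMoivre)
    have "poly (map_poly of_int (Xp n)) z = 0" by (simp add: poly_map_Xp zn)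
    moreover have "poly (map_poly of_int (Xp n)) z = poly (map_poly of_int L) z * poly (map_poly of_int Phi) z"
      by (simp only: Phi map_poly_of_int_mult poly_mult)
    moreover have "poly (map_poly of_int Phi) z = (of_int c :: complex)" by (simp add: c map_poly_pCons)
    ultimately have "poly (map_poly of_int L) z * of_int c = 0" by simp
    moreover have "c \<noteq> 0" using Phinz c by simp
    ultimately have "poly (map_poly (of_int :: int \<Rightarrow> complex) L) z = 0" by simp
    hence "poly (map_poly (of_int :: int \<Rightarrow> complex) (\<Prod>d\<in>Ds. Xp d)) z = 0"
      by (simp add: M map_poly_of_int_mult)
    moreover have "poly (map_poly (of_int :: int \<Rightarrow> complex) (\<Prod>d\<in>Ds. Xp d)) z = (\<Prod>d\<in>Ds. z ^ d - 1)"
      using finDs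
    proof (induction Ds rule: finite_induct)
      case (insert x F)
      thus ?case by (simp add: map_poly_of_int_mult poly_map_Xp)
    qed simp
    ultimately obtain d where "d \<in> Ds" "z ^ d = 1" using finDs by auto
    moreover have "d > 0" using \<open>d \<in> Ds\<close> n2 unfolding Ds_def by (intro Nat.gr0I) auto
    ultimately show False using cis_pow_ne_1[of d n] unfolding z_def Ds_def by auto
  qed
  define Pc where "Pc = map_poly (of_int :: int \<Rightarrow> complex) Phi"
  have degPc: "degree Pc = degree Phi" unfolding Pc_def by (simp add: degree_map_poly)
  have lcPc: "lead_coeff Pc = of_int (lead_coeff Phi)" unfolding Pc_def
    by (simp add: degree_map_poly coeff_map_poly)
  obtain r where r: "Polynomial.smult (lead_coeff Pc) (\<Prod>i<degree Pc. [:- r i, 1:]) = Pc"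
    using complex_poly_decompose' by blast
  have Pcq: "poly Pc (of_int q) = of_int (lead_coeff Phi) * (\<Prod>i<degree Phi. of_int q - r i)"
  proof -
    have lc': "poly.coeff Pc (degree Phi) = of_int (lead_coeff Phi)" using lcPc degPc by simp
    show ?thesis using arg_cong[OF r, of "\<lambda>p. poly p (of_int q)"] by (simp add: poly_prod lc' degPc)
  qed
  have rootr: "poly Pc (r i) = 0" if "i < degree Phi" for i
  proof -
    have "poly Pc (r i) = lead_coeff Pc * (\<Prod>j<degree Pc. r i - r j)"
      using arg_cong[OF r, of "\<lambda>p. poly p (r i)"] by (simp add: poly_prod)
    also have "(\<Prod>j<degree Pc. r i - r j) = 0" using that degPc
      by (intro prod_zero) auto
    finally show ?thesis by simp
  qed
  have rprop: "cmod (r i) = 1 \<and> r i \<noteq> 1" if "i < degree Phi" for i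
  proof -
    have "poly (map_poly (of_int :: int \<Rightarrow> complex) (Xp n)) (r i) = 0"
      using rootr[OF that] by (simp add: Phi map_poly_of_int_mult Pc_def)
    hence "r i ^ n = 1" by (simp add: poly_map_Xp)
    hence "cmod (r i) ^ n = 1" by (metis norm_one norm_power)
    hence c1: "cmod (r i) = 1" using power_eq_iff_eq_base[of n "cmod (r i)" 1] n2 by simp
    have "r i \<noteq> 1"
    proof
      assume "r i = 1"
      hence "poly Pc 1 = 0" using rootr[OF that] by simp
      hence "(of_int (poly Phi 1) :: complex) = 0"
        using poly_map_poly_of_int[of Phi 1, where 'a=complex] by (simp add: Pc_def)
      thus False using Phi1 by simp
    qed
    thus ?thesis using c1 by simp
  qed
  have prodgt: "(\<Prod>i<k. cmod (of_int q - r i)) > real_of_int q - 1" if "1 \<le> k" "k \<le> degree Phi" for k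
    using that
  proof (induction k rule: dec_induct)
    case base
    have "cmod (of_real (real_of_int q) - r 0) > real_of_int q - 1"
      using rprop[of 0] base q2 by (intro cmod_gt_aux) auto
    thus ?case by simp
  next
    case (step k)
    have f: "cmod (of_real (real_of_int q) - r k) > real_of_int q - 1"
      using rprop[of k] step q2 by (intro cmod_gt_aux) auto
    have "real_of_int q - 1 \<ge> 1" using q2 by simp
    hence "cmod (of_int q - r k) \<ge> 1" using f by simp
    hence "(\<Prod>i<k. cmod (of_int q - r i)) * 1 \<le> (\<Prod>i<k. cmod (of_int q - r i)) * cmod (of_int q - r k)"
      by (intro mult_left_mono) (auto intro: prod_nonneg)
    thus ?case using step by simp
  qed
  have "cmod (poly Pc (of_int q)) = \<bar>real_of_int (lead_coeff Phi)\<bar> * (\<Prod>i<degree Phi. cmod (of_int q - r i))"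
    by (simp add: Pcq norm_mult prod_norm)
  moreover have "\<bar>real_of_int (lead_coeff Phi)\<bar> \<ge> 1"
  proof -
    have "lead_coeff Phi \<noteq> 0" using Phinz by simp
    hence "\<bar>lead_coeff Phi\<bar> \<ge> 1" by linarith
    thus ?thesis by linarith
  qed
  moreover have "(\<Prod>i<degree Phi. cmod (of_int q - r i)) > real_of_int q - 1"
    using prodgt[OF degPhi] by simp
  moreover have "real_of_int q - 1 \<ge> 0" using q2 by simp
  ultimately have "cmod (poly Pc (of_int q)) > real_of_int q - 1"
    by (smt (verit) mult_le_cancel_right1)
  moreover have "poly Pc (of_int q) = of_int (poly Phi q)"
    unfolding Pc_def by (rule poly_map_poly_of_int)
  ultimately have "\<bar>poly Phi q\<bar> > q - 1" by simp
  thus ?thesis using divT divN by (intro exI[of _ "\<bar>poly Phi q\<bar>"]) auto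
qed


definition csr :: "'r::division_ring set \<Rightarrow> bool" where
  "csr S \<longleftrightarrow> 0 \<in> S \<and> 1 \<in> S \<and> (\<forall>x\<in>S. \<forall>y\<in>S. x + y \<in> S \<and> x * y \<in> S) \<and> (\<forall>x\<in>S. - x \<in> S)"

lemma csrD:
  assumes "csr S"
  shows "0 \<in> S" "1 \<in> S" "x \<in> S \<Longrightarrow> y \<in> S \<Longrightarrow> x + y \<in> S"
    "x \<in> S \<Longrightarrow> y \<in> S \<Longrightarrow> x * y \<in> S" "x \<in> S \<Longrightarrow> - x \<in> S"
    "x \<in> S \<Longrightarrow> y \<in> S \<Longrightarrow> x - y \<in> S"
proof -
  show "0 \<in> S" "1 \<in> S" "x \<in> S \<Longrightarrow> y \<in> S \<Longrightarrow> x + y \<in> S"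
    "x \<in> S \<Longrightarrow> y \<in> S \<Longrightarrow> x * y \<in> S" "x \<in> S \<Longrightarrow> - x \<in> S"
    using assms unfolding csr_def by auto
  show "x \<in> S \<Longrightarrow> y \<in> S \<Longrightarrow> x - y \<in> S"
    using assms unfolding csr_def by (metis diff_conv_add_uminus)
qed

lemma csr_inverse:
  assumes "csr S" "finite S" "x \<in> S"
  shows "inverse x \<in> S"
proof (cases "x = 0")
  case True thus ?thesis using csrD(1)[OF assms(1)] by simp
next
  case False
  have "(\<lambda>y. x * y) ` S = S"
  proof (rule endo_inj_surj[OF assms(2)])
    show "(\<lambda>y. x * y) ` S \<subseteq> S" using csrD(4)[OF assms(1) assms(3)] by auto
    show "inj_on (\<lambda>y. x * y) S" using False by (auto intro!: inj_onI)
  qed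
  then obtain y where y: "y \<in> S" "x * y = 1" using csrD(2)[OF assms(1)]
    by (metis imageE)
  hence "y = inverse x" using False
    by (metis inverse_unique)
  thus ?thesis using y by simp
qed

lemma card_module_aux:
  fixes T V :: "'r::division_ring set"
  assumes T: "csr T" "finite T" and V: "finite V" "0 \<in> V" "\<And>u v. u \<in> V \<Longrightarrow> v \<in> V \<Longrightarrow> u + v \<in> V"
    "\<And>t v. t \<in> T \<Longrightarrow> v \<in> V \<Longrightarrow> t * v \<in> V"
  shows "\<forall>W. card V - card W = m \<longrightarrow> W \<subseteq> V \<longrightarrow> 0 \<in> W \<longrightarrow> (\<forall>u\<in>W. \<forall>v\<in>W. u + v \<in> W)
     \<longrightarrow> (\<forall>t\<in>T. \<forall>v\<in>W. t * v \<in> W) \<longrightarrow> (\<exists>k. card V = card W * card T ^ k)"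
proof (induction m rule: less_induct)
  case (less m)
  show ?case
  proof (intro allI impI)
    fix W assume m: "card V - card W = m" and WV: "W \<subseteq> V" and W0: "0 \<in> W"
      and Wadd: "\<forall>u\<in>W. \<forall>v\<in>W. u + v \<in> W" and Wmul: "\<forall>t\<in>T. \<forall>v\<in>W. t * v \<in> W"
    have finW: "finite W" using WV V(1) finite_subset by auto
    show "\<exists>k. card V = card W * card T ^ k"
    proof (cases "W = V")
      case True thus ?thesis by (intro exI[of _ 0]) simp
    next
      case False
      then obtain v where v: "v \<in> V" "v \<notin> W" using WV by auto
      define W' where "W' = (\<lambda>(w, t). w + t * v) ` (W \<times> T)"
      have Wsub: "u - w \<in> W" if "u \<in> W" "w \<in> W" for u w
      proof -
        have "- 1 \<in> T" using csrD(2,5)[OF T(1)] by auto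
        hence "(- 1) * w \<in> W" using Wmul that by auto
        hence "u + (- 1) * w \<in> W" using Wadd that by auto
        thus ?thesis by simp
      qed
      have inj: "inj_on (\<lambda>(w, t). w + t * v) (W \<times> T)"
      proof (rule inj_onI, clarify)
        fix w t w' t' assume a: "w \<in> W" "t \<in> T" "w' \<in> W" "t' \<in> T" "w + t * v = w' + t' * v"
        have "t = t'"
        proof (rule ccontr)
          assume "t \<noteq> t'"
          have eq: "(t - t') * v = w' - w" using a(5) by (simp add: algebra_simps)
          have "t - t' \<in> T" using csrD(6)[OF T(1)] a by auto
          hence "inverse (t - t') \<in> T" using csr_inverse[OF T] by auto
          hence "inverse (t - t') * (w' - w) \<in> W" using Wmul Wsub a by auto
          moreover have "inverse (t - t') * (w' - w) = v"
          proof -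
            have "inverse (t - t') * (w' - w) = inverse (t - t') * ((t - t') * v)" using eq by simp
            also have "\<dots> = (inverse (t - t') * (t - t')) * v" by (simp only: mult.assoc)
            also have "\<dots> = v" using \<open>t \<noteq> t'\<close> by simp
            finally show ?thesis .
          qed
          ultimately show False using v by simp
        qed
        thus "w = w' \<and> t = t'" using a(5) by simp
      qed
      have cardW': "card W' = card W * card T"
        unfolding W'_def using card_image[OF inj] by (simp add: card_cartesian_product)
      have W'V: "W' \<subseteq> V"
      proof
        fix u assume "u \<in> W'"
        then obtain w t where wt: "w \<in> W" "t \<in> T" "u = w + t * v" unfolding W'_def by auto
        have "t * v \<in> V" using V(4)[OF wt(2) v(1)] .
        moreover have "w \<in> V" using wt(1) WV by auto
        ultimately show "u \<in> V" using V(3) wt(3) by simp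
      qed
      have WW': "W \<subseteq> W'" unfolding W'_def
      proof
        fix w assume "w \<in> W"
        hence "(w, 0) \<in> W \<times> T" using csrD(1)[OF T(1)] by auto
        thus "w \<in> (\<lambda>(w, t). w + t * v) ` (W \<times> T)" by force
      qed
      have vW': "v \<in> W'" unfolding W'_def
      proof -
        have "(0, 1) \<in> W \<times> T" using csrD(2)[OF T(1)] W0 by auto
        thus "v \<in> (\<lambda>(w, t). w + t * v) ` (W \<times> T)" by force
      qed
      have "W \<subset> W'" using WW' vW' v(2) by blast
      moreover have "finite W'" using W'V V(1) finite_subset by blast
      ultimately have "card W < card W'" by (simp add: psubset_card_mono)
      moreover have "card W' \<le> card V" using W'V V(1) by (simp add: card_mono)
      ultimately have lt: "card V - card W' < m" using m by simp
      have W'0: "0 \<in> W'" using WW' W0 by blast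
      have W'add: "\<forall>u\<in>W'. \<forall>u'\<in>W'. u + u' \<in> W'"
      proof (intro ballI)
        fix u u' assume "u \<in> W'" "u' \<in> W'"
        then obtain w t w' t' where "w \<in> W" "t \<in> T" "w' \<in> W" "t' \<in> T" "u = w + t * v" "u' = w' + t' * v"
          unfolding W'_def by auto
        moreover have "u + u' = (w + w') + (t + t') * v" using calculation by (simp add: algebra_simps)
        moreover have "(w + w', t + t') \<in> W \<times> T" using calculation Wadd csrD(3)[OF T(1)] by auto
        ultimately show "u + u' \<in> W'" unfolding W'_def by force
      qed
      have W'mul: "\<forall>s\<in>T. \<forall>u\<in>W'. s * u \<in> W'"
      proof (intro ballI)
        fix s u assume "s \<in> T" "u \<in> W'"
        then obtain w t where "w \<in> W" "t \<in> T" "u = w + t * v"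
          unfolding W'_def by auto
        moreover have "s * u = s * w + (s * t) * v" using calculation by (simp add: algebra_simps)
        moreover have "(s * w, s * t) \<in> W \<times> T" using calculation Wmul csrD(4)[OF T(1)] \<open>s \<in> T\<close> by auto
        ultimately show "s * u \<in> W'" unfolding W'_def by force
      qed
      have "\<exists>k. card V = card W' * card T ^ k"
        using less.IH[OF lt] W'V W'0 W'add W'mul by blast
      then obtain k where "card V = card W' * card T ^ k" by blast
      hence "card V = card W * card T ^ Suc k" by (simp add: cardW')
      thus ?thesis by blast
    qed
  qed
qed

lemma card_module:
  fixes T V :: "'r::division_ring set"
  assumes T: "csr T" "finite T" and V: "finite V" "0 \<in> V" "\<And>u v. u \<in> V \<Longrightarrow> v \<in> V \<Longrightarrow> u + v \<in> V"
    "\<And>t v. t \<in> T \<Longrightarrow> v \<in> V \<Longrightarrow> t * v \<in> V"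
  shows "\<exists>k. card V = card T ^ k"
proof -
  note A = card_module_aux[OF T V, of "card V - card {0}"]
  have "\<exists>k. card V = card {0} * card T ^ k"
    using spec[OF A, of "{0}"] V(2) by simp
  thus ?thesis by simp
qed

lemma conj_eq_iff:
  fixes g x y :: "'r::division_ring"
  assumes "g \<noteq> 0"
  shows "g * x * inverse g = y \<longleftrightarrow> g * x = y * g"
proof
  assume "g * x * inverse g = y"
  hence "g * x * inverse g * g = y * g" by simp
  thus "g * x = y * g" using assms by (simp add: mult.assoc)
next
  assume "g * x = y * g"
  hence "g * x * inverse g = y * g * inverse g" by simp
  thus "g * x * inverse g = y" using assms by (simp add: mult.assoc)
qed

lemma orbit_stab:
  fixes S :: "'r::division_ring set"
  assumes csr: "csr S" and fin: "finite S" and x: "x \<in> S"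
  defines "G \<equiv> S - {0}"
  shows "card G = card ((\<lambda>g. g * x * inverse g) ` G) * card ({s\<in>S. s * x = x * s} - {0})"
proof -
  define f where "f = (\<lambda>g. g * x * inverse g)"
  define Cx where "Cx = {s\<in>S. s * x = x * s} - {0}"
  have finG: "finite G" using fin unfolding G_def by auto
  have fib: "{g\<in>G. f g = f g0} = (\<lambda>c. g0 * c) ` Cx" if g0: "g0 \<in> G" for g0
  proof
    have g0nz: "g0 \<noteq> 0" and g0S: "g0 \<in> S" using g0 unfolding G_def by auto
    show "{g\<in>G. f g = f g0} \<subseteq> (\<lambda>c. g0 * c) ` Cx"
    proof
      fix g assume g: "g \<in> {g\<in>G. f g = f g0}"
      hence gnz: "g \<noteq> 0" and gS: "g \<in> S" unfolding G_def by auto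
      define c where "c = inverse g0 * g"
      have cS: "c \<in> S" unfolding c_def using csrD(4)[OF csr] csr_inverse[OF csr fin g0S] gS by auto
      have cnz: "c \<noteq> 0" unfolding c_def using gnz g0nz by simp
      have gc: "g = g0 * c" unfolding c_def using g0nz by (simp add: mult.assoc[symmetric])
      have "g * x = f g0 * g" using g conj_eq_iff[OF gnz] unfolding f_def by auto
      hence "g0 * c * x = g0 * x * inverse g0 * (g0 * c)" using gc unfolding f_def by simp
      moreover have "g0 * x * inverse g0 * (g0 * c) = g0 * x * (inverse g0 * g0) * c" by (simp only: mult.assoc)
      ultimately have "g0 * (c * x) = g0 * (x * c)" using g0nz by (simp add: mult.assoc)
      hence "c * x = x * c" using g0nz by simp
      hence "c \<in> Cx" using cS cnz unfolding Cx_def by auto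
      thus "g \<in> (\<lambda>c. g0 * c) ` Cx" using gc by auto
    qed
    show "(\<lambda>c. g0 * c) ` Cx \<subseteq> {g\<in>G. f g = f g0}"
    proof
      fix g assume "g \<in> (\<lambda>c. g0 * c) ` Cx"
      then obtain c where c: "c \<in> Cx" "g = g0 * c" by auto
      have cS: "c \<in> S" and cnz: "c \<noteq> 0" and cx: "c * x = x * c" using c unfolding Cx_def by auto
      have gG: "g \<in> G" using c(2) csrD(4)[OF csr g0S cS] g0nz cnz unfolding G_def by auto
      have "g * x = f g0 * g"
      proof -
        have "f g0 * g = g0 * x * (inverse g0 * g0) * c" unfolding f_def c(2) by (simp add: mult.assoc)
        also have "\<dots> = g0 * (x * c)" using g0nz by (simp add: mult.assoc)
        also have "\<dots> = g * x" using cx c(2) by (simp add: mult.assoc)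
        finally show ?thesis by simp
      qed
      hence "f g = f g0" using conj_eq_iff[of g x "f g0"] cnz g0nz c(2) unfolding f_def by simp
      thus "g \<in> {g\<in>G. f g = f g0}" using gG by simp
    qed
  qed
  have cardfib: "card {g\<in>G. f g = y} = card Cx" if y: "y \<in> f ` G" for y
  proof -
    obtain g0 where g0: "g0 \<in> G" "y = f g0" using y by auto
    have g0nz: "g0 \<noteq> 0" using g0 unfolding G_def by auto
    have "card {g\<in>G. f g = y} = card ((\<lambda>c. g0 * c) ` Cx)" using fib[OF g0(1)] g0(2) by simp
    also have "\<dots> = card Cx" using g0nz by (intro card_image inj_onI) auto
    finally show ?thesis .
  qed
  have "G = (\<Union>y\<in>f ` G. {g\<in>G. f g = y})" by auto
  moreover have "card (\<Union>y\<in>f ` G. {g\<in>G. f g = y}) = (\<Sum>y\<in>f ` G. card {g\<in>G. f g = y})"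
    by (rule card_UN_disjoint) (auto simp: finG)
  ultimately have "card G = (\<Sum>y\<in>f ` G. card {g\<in>G. f g = y})" by simp
  also have "\<dots> = (\<Sum>y\<in>f ` G. card Cx)" using cardfib by simp
  also have "\<dots> = card (f ` G) * card Cx" by simp
  finally show ?thesis unfolding f_def Cx_def .
qed

lemma commute_mult:
  fixes a b s :: "'r::ring"
  assumes "a * s = s * a" "b * s = s * b"
  shows "(a * b) * s = s * (a * b)"
proof -
  have "(a * b) * s = a * (b * s)" by (simp only: mult.assoc)
  also have "\<dots> = a * (s * b)" using assms(2) by simp
  also have "\<dots> = (a * s) * b" by (simp only: mult.assoc)
  also have "\<dots> = (s * a) * b" using assms(1) by simp
  also have "\<dots> = s * (a * b)" by (simp only: mult.assoc)
  finally show ?thesis .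
qed

lemma wedderburn_sub:
  fixes S :: "'r::division_ring set"
  assumes csr: "csr S" and fin: "finite S"
  shows "\<forall>x\<in>S. \<forall>y\<in>S. x * y = y * x"
proof (rule ccontr)
  assume nc: "\<not> (\<forall>x\<in>S. \<forall>y\<in>S. x * y = y * x)"
  define Z where "Z = {z\<in>S. \<forall>s\<in>S. z * s = s * z}"
  define C where "C x = {s\<in>S. s * x = x * s}" for x
  define G where "G = S - {0}"
  define cl where "cl x = (\<lambda>g. g * x * inverse g) ` G" for x
  have ZS: "Z \<subseteq> S" unfolding Z_def by blast
  have csrZ: "csr Z"
    unfolding csr_def
  proof (intro conjI ballI)
    show "0 \<in> Z" "1 \<in> Z" unfolding Z_def using csrD(1,2)[OF csr] by simp_all
  next
    fix x y assume xy: "x \<in> Z" "y \<in> Z"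
    show "x + y \<in> Z" unfolding Z_def
    proof (intro CollectI conjI ballI)
      show "x + y \<in> S" using xy csrD(3)[OF csr] unfolding Z_def by blast
      fix s assume "s \<in> S"
      hence "x * s = s * x" "y * s = s * y" using xy unfolding Z_def by blast+
      thus "(x + y) * s = s * (x + y)" by (simp add: distrib_left distrib_right)
    qed
    show "x * y \<in> Z" unfolding Z_def
    proof (intro CollectI conjI ballI)
      show "x * y \<in> S" using xy csrD(4)[OF csr] unfolding Z_def by blast
      fix s assume "s \<in> S"
      hence "x * s = s * x" "y * s = s * y" using xy unfolding Z_def by blast+
      thus "x * y * s = s * (x * y)" by (rule commute_mult)
    qed
  next
    fix x assume "x \<in> Z"
    hence xZ: "x \<in> S" "\<forall>s\<in>S. x * s = s * x" unfolding Z_def by blast+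
    have "\<forall>s\<in>S. - x * s = s * - x" using xZ(2) by (auto simp del: minus_mult_commute)
    thus "- x \<in> Z" using csrD(5)[OF csr xZ(1)] unfolding Z_def by blast
  qed
  have finZ: "finite Z" using fin ZS finite_subset by auto
  have csrC: "csr (C x)" if "x \<in> S" for x
    unfolding csr_def
  proof (intro conjI ballI)
    show "0 \<in> C x" "1 \<in> C x" unfolding C_def using csrD(1,2)[OF csr] by simp_all
  next
    fix a b assume ab: "a \<in> C x" "b \<in> C x"
    have "a * x = x * a" "b * x = x * b" using ab unfolding C_def by blast+
    hence "(a + b) * x = x * (a + b)" by (simp add: distrib_left distrib_right)
    thus "a + b \<in> C x" using ab csrD(3)[OF csr] unfolding C_def by blast
    have "a * x = x * a" "b * x = x * b" using ab unfolding C_def by blast+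
    hence "a * b * x = x * (a * b)" by (intro commute_mult) auto
    thus "a * b \<in> C x" using ab csrD(4)[OF csr] unfolding C_def by blast
  next
    fix a assume a: "a \<in> C x"
    hence aC: "a \<in> S" "a * x = x * a" unfolding C_def by blast+
    have "- a * x = x * - a" using aC(2) by simp
    thus "- a \<in> C x" using csrD(5)[OF csr aC(1)] unfolding C_def by blast
  qed
  have CS: "C x \<subseteq> S" for x unfolding C_def by blast
  have finC: "finite (C x)" for x using fin CS finite_subset by metis
  define q where "q = card Z"
  have q2: "q \<ge> 2"
  proof -
    have "{0, 1} \<subseteq> Z" using csrD(1,2)[OF csrZ] by auto
    hence "card {0, 1::'r} \<le> card Z" using finZ by (intro card_mono) auto
    thus ?thesis unfolding q_def by simp
  qed
  obtain n where n: "card S = q ^ n"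
    unfolding q_def
    using card_module[OF csrZ finZ fin csrD(1)[OF csr] csrD(3)[OF csr]] ZS csrD(4)[OF csr] by blast
  have key: "\<exists>d. d dvd n \<and> d < n \<and> 0 < d \<and> card (C x) = q ^ d" if x: "x \<in> S" "x \<notin> Z" for x
  proof -
    have ZC: "Z \<subseteq> C x" unfolding Z_def C_def using x by blast
    obtain d where d: "card (C x) = q ^ d"
      unfolding q_def
    proof (rule exE[OF card_module[OF csrZ finZ finC csrD(1)[OF csrC[OF x(1)]] csrD(3)[OF csrC[OF x(1)]]]])
      show "\<And>t v. t \<in> Z \<Longrightarrow> v \<in> C x \<Longrightarrow> t * v \<in> C x"
        using ZC csrD(4)[OF csrC[OF x(1)]] by auto
    qed auto
    obtain e where e: "card S = card (C x) ^ e"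
      using card_module[OF csrC[OF x(1)] finC fin csrD(1)[OF csr] csrD(3)[OF csr]] CS csrD(4)[OF csr] by blast
    have "q ^ n = q ^ (d * e)" using n e d by (simp add: power_mult)
    hence ne: "n = d * e" using q2 by simp
    obtain s where s: "s \<in> S" "x * s \<noteq> s * x" using x unfolding Z_def by blast
    have "s \<notin> C x" using s unfolding C_def by (auto simp del: mult_cancel_left)
    hence "C x \<subset> S" using CS s by auto
    hence "card (C x) < card S" using fin by (simp add: psubset_card_mono)
    hence "q ^ d < q ^ n" using d n by simp
    hence dn: "d < n" using q2 by (simp add: power_strict_increasing_iff)
    have "{0, 1} \<subseteq> C x" using csrD(1,2)[OF csrC[OF x(1)]] by auto
    hence "card {0, 1::'r} \<le> card (C x)" using finC by (intro card_mono) auto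
    hence "d \<noteq> 0" using d by (cases d) auto
    thus ?thesis using dn ne d by (intro exI[of _ d]) auto
  qed
  obtain x0 y0 where xy0: "x0 \<in> S" "y0 \<in> S" "x0 * y0 \<noteq> y0 * x0" using nc by auto
  have "x0 \<notin> Z" using xy0 unfolding Z_def by blast
  then obtain d0 where "d0 dvd n" "d0 < n" "0 < d0" using key xy0(1) by blast
  hence n2: "n \<ge> 2" by simp
  obtain P :: int where P: "P > int q - 1" "P dvd int q ^ n - 1"
    "\<And>d T. d dvd n \<Longrightarrow> d < n \<Longrightarrow> T * (int q ^ d - 1) = int q ^ n - 1 \<Longrightarrow> P dvd T"
    using cyclotomic_bound[OF n2, of "int q"] q2 by auto
  have finG: "finite G" unfolding G_def using fin by auto
  have GS: "G \<subseteq> S" unfolding G_def by auto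
  have invG: "inverse g \<in> G" if "g \<in> G" for g
    using that csr_inverse[OF csr fin] unfolding G_def by auto
  have mulG: "g * h \<in> G" if "g \<in> G" "h \<in> G" for g h
    using that csrD(4)[OF csr] unfolding G_def by auto
  have clG: "cl x \<subseteq> G - Z" if x: "x \<in> G - Z" for x
  proof
    fix y assume "y \<in> cl x"
    then obtain g where g: "g \<in> G" "y = g * x * inverse g" unfolding cl_def by auto
    have gnz: "g \<noteq> 0" using g unfolding G_def by auto
    have yG: "y \<in> G" using g mulG invG x by auto
    have "y \<notin> Z"
    proof
      assume "y \<in> Z"
      hence "y * g = g * y" using g GS unfolding Z_def by blast
      moreover have "g * x = y * g" using g(2) conj_eq_iff[OF gnz, of x y] by simp
      ultimately have "g * x = g * y" by simp
      hence "x = y" using gnz by simp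
      thus False using x \<open>y \<in> Z\<close> by simp
    qed
    thus "y \<in> G - Z" using yG by simp
  qed
  have cl_self: "x \<in> cl x" if "x \<in> G" for x
  proof -
    have "1 \<in> G" unfolding G_def using csrD(2)[OF csr] by simp
    thus ?thesis unfolding cl_def by force
  qed
  have cl_sub: "cl y \<subseteq> cl x" if x: "x \<in> G" and y: "y \<in> cl x" for x y
  proof
    fix z assume "z \<in> cl y"
    then obtain h where h: "h \<in> G" "z = h * y * inverse h" unfolding cl_def by auto
    obtain g where g: "g \<in> G" "y = g * x * inverse g" using y unfolding cl_def by auto
    have nz: "g \<noteq> 0" "h \<noteq> 0" using g h unfolding G_def by auto
    have "z = (h * g) * x * inverse (h * g)"
      using h g nz by (simp add: nonzero_inverse_mult_distrib mult.assoc)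
    moreover have "h * g \<in> G" using mulG g h by simp
    ultimately show "z \<in> cl x" unfolding cl_def by blast
  qed
  have cl_eq: "cl y = cl x" if x: "x \<in> G" and y: "y \<in> cl x" for x y
  proof
    show "cl y \<subseteq> cl x" using cl_sub[OF x y] .
    obtain g where g: "g \<in> G" "y = g * x * inverse g" using y unfolding cl_def by auto
    have nz: "g \<noteq> 0" using g unfolding G_def by auto
    have yG: "y \<in> G" using g mulG invG x by auto
    have "inverse g * y * inverse (inverse g) = (inverse g * g) * x * (inverse g * g)"
      using g(2) by (simp add: mult.assoc)
    hence "x = inverse g * y * inverse (inverse g)" using nz by simp
    hence "x \<in> cl y" unfolding cl_def using invG[OF g(1)] by blast
    thus "cl x \<subseteq> cl y" using cl_sub[OF yG] by simp
  qed
  define Cls where "Cls = cl ` (G - Z)"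
  have UCls: "\<Union>Cls = G - Z"
  proof
    show "\<Union>Cls \<subseteq> G - Z" unfolding Cls_def using clG by auto
    show "G - Z \<subseteq> \<Union>Cls" unfolding Cls_def using cl_self by blast
  qed
  have disj: "pairwise disjnt Cls"
  proof (rule pairwiseI)
    fix A B assume AB: "A \<in> Cls" "B \<in> Cls" "A \<noteq> B"
    then obtain a b where ab: "a \<in> G - Z" "b \<in> G - Z" "A = cl a" "B = cl b" unfolding Cls_def by auto
    show "disjnt A B"
    proof (rule ccontr)
      assume "\<not> disjnt A B"
      then obtain y where "y \<in> cl a" "y \<in> cl b" using ab unfolding disjnt_def by auto
      moreover have "a \<in> G" "b \<in> G" using ab by auto
      ultimately have "cl a = cl b" using cl_eq by metis
      thus False using ab AB by simp
    qed
  qed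
  have finCls: "finite Cls" unfolding Cls_def using finG by simp
  have finA: "finite A" if "A \<in> Cls" for A
  proof -
    have "A \<subseteq> G" using that UCls by blast
    thus ?thesis using finG finite_subset by blast
  qed
  have cardGZ: "card (G - Z) = sum card Cls"
    using card_Union_disjoint[OF disj finA] UCls by simp
  have P_dvd_cls: "P dvd int (card A)" if A: "A \<in> Cls" for A
  proof -
    obtain x where x: "x \<in> G - Z" "A = cl x" using A unfolding Cls_def by auto
    hence xS: "x \<in> S" "x \<notin> Z" unfolding G_def by auto
    obtain d where d: "d dvd n" "d < n" "0 < d" "card (C x) = q ^ d" using key[OF xS] by blast
    have os: "card G = card A * card (C x - {0})"
      using orbit_stab[OF csr fin xS(1)] x unfolding G_def cl_def C_def by simp
    have "card G = q ^ n - 1" unfolding G_def using n csrD(1)[OF csr] fin by (simp add: card_Diff_singleton)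
    moreover have "card (C x - {0}) = q ^ d - 1" using d(4) csrD(1)[OF csrC[OF xS(1)]] finC
      by (simp add: card_Diff_singleton)
    ultimately have "q ^ n - 1 = card A * (q ^ d - 1)" using os by simp
    moreover have "q ^ d \<ge> 1" "q ^ n \<ge> 1" using q2 by simp_all
    ultimately have "int (q ^ n - 1) = int (card A * (q ^ d - 1))" by simp
    hence "int (q ^ n) - 1 = int (card A) * (int (q ^ d) - 1)"
      using \<open>q ^ d \<ge> 1\<close> \<open>q ^ n \<ge> 1\<close> by (simp add: of_nat_diff)
    hence "int (card A) * (int q ^ d - 1) = int q ^ n - 1" by simp
    thus ?thesis using P(3)[OF d(1,2)] by blast
  qed
  have "P dvd int (sum card Cls)"
    unfolding of_nat_sum using P_dvd_cls by (intro dvd_sum) auto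
  hence "P dvd int (card (G - Z))" using cardGZ by simp
  moreover have "card (G - Z) = card G - card (Z - {0})"
  proof -
    have "Z - {0} \<subseteq> G" unfolding G_def using ZS by auto
    moreover have "G - Z = G - (Z - {0})" unfolding G_def by auto
    ultimately show ?thesis using finG by (metis card_Diff_subset finite_subset)
  qed
  moreover have "card G = q ^ n - 1" unfolding G_def using n csrD(1)[OF csr] fin by (simp add: card_Diff_singleton)
  moreover have "card (Z - {0}) = q - 1" unfolding q_def using csrD(1)[OF csrZ] finZ by (simp add: card_Diff_singleton)
  moreover have "q ^ n \<ge> q" using q2 n2 by (simp add: power_increasing[of 1 n q, simplified])
  ultimately have "P dvd (int q ^ n - 1) - (int q - 1)"
    using q2 by (simp add: of_nat_diff)
  hence "P dvd (int q ^ n - 1) - ((int q ^ n - 1) - (int q - 1))" using P(2) by (metis dvd_diff)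
  hence "P dvd int q - 1" by simp
  moreover have "int q - 1 > 0" using q2 by simp
  ultimately have "P \<le> int q - 1" by (intro zdvd_imp_le)
  thus False using P(1) by simp
qed


definition fstruct :: "'r::division_ring set \<Rightarrow> 'r ring" where
  "fstruct K = \<lparr>carrier = K, mult = (\<lambda>x y. x * y), one = 1, zero = 0, add = (\<lambda>x y. x + y)\<rparr>"

lemma fstruct_field:
  fixes K :: "'r::division_ring set"
  assumes csr: "csr K" and fin: "finite K" and comm: "\<forall>x\<in>K. \<forall>y\<in>K. x * y = y * x"
  shows "field (fstruct K)"
proof -
  let ?R = "fstruct K"
  have ag: "abelian_group ?R"
  proof (rule abelian_groupI)
    show "\<And>x y. x \<in> carrier ?R \<Longrightarrow> y \<in> carrier ?R \<Longrightarrow> x \<oplus>\<^bsub>?R\<^esub> y \<in> carrier ?R"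
      using csrD(3)[OF csr] by (simp add: fstruct_def)
    show "\<zero>\<^bsub>?R\<^esub> \<in> carrier ?R" using csrD(1)[OF csr] by (simp add: fstruct_def)
    show "\<And>x y z. x \<in> carrier ?R \<Longrightarrow> y \<in> carrier ?R \<Longrightarrow> z \<in> carrier ?R \<Longrightarrow>
      x \<oplus>\<^bsub>?R\<^esub> y \<oplus>\<^bsub>?R\<^esub> z = x \<oplus>\<^bsub>?R\<^esub> (y \<oplus>\<^bsub>?R\<^esub> z)"
      by (simp add: fstruct_def add.assoc)
    show "\<And>x y. x \<in> carrier ?R \<Longrightarrow> y \<in> carrier ?R \<Longrightarrow> x \<oplus>\<^bsub>?R\<^esub> y = y \<oplus>\<^bsub>?R\<^esub> x"
      by (simp add: fstruct_def add.commute)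
    show "\<And>x. x \<in> carrier ?R \<Longrightarrow> \<zero>\<^bsub>?R\<^esub> \<oplus>\<^bsub>?R\<^esub> x = x" by (simp add: fstruct_def)
    show "\<And>x. x \<in> carrier ?R \<Longrightarrow> \<exists>y\<in>carrier ?R. y \<oplus>\<^bsub>?R\<^esub> x = \<zero>\<^bsub>?R\<^esub>"
      using csrD(5)[OF csr] by (simp add: fstruct_def) (metis add.left_inverse)
  qed
  have cm: "comm_monoid ?R"
  proof (rule comm_monoidI)
    show "\<And>x y. x \<in> carrier ?R \<Longrightarrow> y \<in> carrier ?R \<Longrightarrow> x \<otimes>\<^bsub>?R\<^esub> y \<in> carrier ?R"
      using csrD(4)[OF csr] by (simp add: fstruct_def)
    show "\<one>\<^bsub>?R\<^esub> \<in> carrier ?R" using csrD(2)[OF csr] by (simp add: fstruct_def)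
    show "\<And>x y z. x \<in> carrier ?R \<Longrightarrow> y \<in> carrier ?R \<Longrightarrow> z \<in> carrier ?R \<Longrightarrow>
      x \<otimes>\<^bsub>?R\<^esub> y \<otimes>\<^bsub>?R\<^esub> z = x \<otimes>\<^bsub>?R\<^esub> (y \<otimes>\<^bsub>?R\<^esub> z)"
      by (simp add: fstruct_def mult.assoc)
    show "\<And>x. x \<in> carrier ?R \<Longrightarrow> \<one>\<^bsub>?R\<^esub> \<otimes>\<^bsub>?R\<^esub> x = x" by (simp add: fstruct_def)
    show "\<And>x y. x \<in> carrier ?R \<Longrightarrow> y \<in> carrier ?R \<Longrightarrow> x \<otimes>\<^bsub>?R\<^esub> y = y \<otimes>\<^bsub>?R\<^esub> x"
      using comm by (simp add: fstruct_def)
  qed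
  have cr: "cring ?R"
    by (rule cringI[OF ag cm]) (simp add: fstruct_def distrib_right)
  show ?thesis
  proof (rule cring.cring_fieldI2[OF cr])
    show "\<zero>\<^bsub>?R\<^esub> \<noteq> \<one>\<^bsub>?R\<^esub>" by (simp add: fstruct_def)
    fix x assume "x \<in> carrier ?R" "x \<noteq> \<zero>\<^bsub>?R\<^esub>"
    hence "x \<in> K" "x \<noteq> 0" by (simp_all add: fstruct_def)
    hence "inverse x \<in> K" "x * inverse x = 1" using csr_inverse[OF csr fin] by simp_all
    thus "\<exists>y\<in>carrier ?R. x \<otimes>\<^bsub>?R\<^esub> y = \<one>\<^bsub>?R\<^esub>" by (auto simp: fstruct_def)
  qed
qed

lemma fstruct_pow: "x [^]\<^bsub>fstruct K\<^esub> (n::nat) = x ^ n"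
  by (induction n) (simp_all add: fstruct_def power_commutes)

lemma field_facts:
  fixes K :: "'r::division_ring set"
  assumes csr: "csr K" and fin: "finite K" and comm: "\<forall>x\<in>K. \<forall>y\<in>K. x * y = y * x"
  shows "\<And>c. c \<in> K \<Longrightarrow> c \<noteq> 0 \<Longrightarrow> c ^ (card K - 1) = 1"
    and "\<And>i. 0 < i \<Longrightarrow> i < card K - 1 \<Longrightarrow> \<exists>g\<in>K. g \<noteq> 0 \<and> g ^ i \<noteq> 1"
proof -
  let ?R = "fstruct K"
  have F: "field ?R" by (rule fstruct_field[OF assms])
  interpret G: group "mult_of ?R" by (rule field.field_mult_group[OF F])
  have cG: "carrier (mult_of ?R) = K - {0}" by (simp add: fstruct_def)
  have oG: "order (mult_of ?R) = card K - 1"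
    unfolding order_def cG using csrD(1)[OF csr] fin by (simp add: card_Diff_singleton)
  fix c assume c: "c \<in> K" "c \<noteq> 0"
  hence "c \<in> carrier (mult_of ?R)" using cG by simp
  hence "c [^]\<^bsub>mult_of ?R\<^esub> order (mult_of ?R) = \<one>\<^bsub>mult_of ?R\<^esub>" by (rule G.pow_order_eq_1)
  thus "c ^ (card K - 1) = 1" using oG by (simp add: nat_pow_mult_of fstruct_pow) (simp add: fstruct_def)
next
  let ?R = "fstruct K"
  have F: "field ?R" by (rule fstruct_field[OF assms])
  have cG: "carrier (mult_of ?R) = K - {0}" by (simp add: fstruct_def)
  fix i :: nat assume i: "0 < i" "i < card K - 1"
  obtain g where g: "g \<in> carrier (mult_of ?R)" "carrier (mult_of ?R) = {g [^]\<^bsub>?R\<^esub> k | k::nat. k \<in> UNIV}"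
    using field.finite_field_mult_group_has_gen[OF F] fin by (auto simp: fstruct_def)
  have gK: "g \<in> K" "g \<noteq> 0" using g(1) cG by auto
  have all: "K - {0} = {g ^ k | k::nat. True}" using g(2) cG by (simp add: fstruct_pow)
  show "\<exists>g\<in>K. g \<noteq> 0 \<and> g ^ i \<noteq> 1"
  proof (rule ccontr)
    assume "\<not> ?thesis"
    hence gi: "g ^ i = 1" using gK by auto
    have "K - {0} \<subseteq> (\<lambda>k. g ^ k) ` {..<i}"
    proof
      fix x assume "x \<in> K - {0}"
      then obtain k where k: "x = g ^ k" using all by auto
      have "g ^ k = g ^ (i * (k div i) + k mod i)" by simp
      also have "\<dots> = g ^ (i * (k div i)) * g ^ (k mod i)" by (rule power_add)
      also have "\<dots> = (g ^ i) ^ (k div i) * g ^ (k mod i)" by (simp only: power_mult)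
      also have "\<dots> = g ^ (k mod i)" using gi by simp
      finally show "x \<in> (\<lambda>k. g ^ k) ` {..<i}" using k i(1) by auto
    qed
    hence "card (K - {0}) \<le> card ((\<lambda>k. g ^ k) ` {..<i})" by (intro card_mono) auto
    also have "\<dots> \<le> i" using card_image_le[of "{..<i}" "\<lambda>k. g ^ k"] by simp
    finally have "card K - 1 \<le> i" using csrD(1)[OF csr] fin by (simp add: card_Diff_singleton)
    thus False using i by simp
  qed
qed

lemma power_mult_commuting:
  fixes x y :: "'r::ring_1"
  assumes "x * y = y * x"
  shows "(x * y) ^ n = x ^ n * y ^ n"
proof (induction n)
  case (Suc n)
  have yxn: "y * x ^ n = x ^ n * y"
  proof (induction n)
    case (Suc n)
    have "y * x ^ Suc n = (y * x) * x ^ n" by (simp add: mult.assoc)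
    also have "\<dots> = x * (y * x ^ n)" using assms by (simp add: mult.assoc[symmetric])
    also have "\<dots> = x ^ Suc n * y" using Suc by (simp add: mult.assoc)
    finally show ?case .
  qed simp
  have "(x * y) ^ Suc n = (x * y) * (x ^ n * y ^ n)" using Suc by simp
  also have "\<dots> = x * (y * x ^ n) * y ^ n" by (simp add: mult.assoc)
  also have "\<dots> = x ^ Suc n * y ^ Suc n" using yxn by (simp add: mult.assoc)
  finally show ?case .
qed simp

lemma power_sums:
  fixes K :: "'r::division_ring set"
  assumes csr: "csr K" and fin: "finite K" and comm: "\<forall>x\<in>K. \<forall>y\<in>K. x * y = y * x"
  shows "of_nat (card K) = (0::'r)"
    and "\<And>i. i < card K \<Longrightarrow> (\<Sum>c\<in>K. c ^ i) = (if i = card K - 1 then - 1 else 0)"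
proof -
  have K01: "0 \<in> K" "1 \<in> K" using csrD(1,2)[OF csr] by auto
  have Q2: "card K \<ge> 2"
  proof -
    have "card {0, 1::'r} \<le> card K" using K01 fin by (intro card_mono) auto
    thus ?thesis by simp
  qed
  have img: "(\<lambda>c. c + 1) ` K = K"
    by (rule endo_inj_surj[OF fin]) (auto intro: csrD(3)[OF csr] K01 inj_onI)
  have "(\<Sum>c\<in>K. c) = (\<Sum>c\<in>(\<lambda>c. c + 1) ` K. c)" using img by simp
  also have "\<dots> = (\<Sum>c\<in>K. c + 1)" by (subst sum.reindex) (auto intro: inj_onI)
  also have "\<dots> = (\<Sum>c\<in>K. c) + of_nat (card K)" by (simp add: sum.distrib)
  finally show Q0: "of_nat (card K) = (0::'r)" by simp
  fix i assume i: "i < card K"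
  show "(\<Sum>c\<in>K. c ^ i) = (if i = card K - 1 then - 1 else 0)"
  proof (cases "i = card K - 1")
    case True
    have "(\<Sum>c\<in>K. c ^ i) = 0 ^ i + (\<Sum>c\<in>K - {0}. c ^ i)"
      using K01 fin by (simp add: sum.remove)
    also have "(\<Sum>c\<in>K - {0}. c ^ i) = (\<Sum>c\<in>K - {0}. 1)"
      using field_facts(1)[OF csr fin comm] True by (intro sum.cong) auto
    also have "\<dots> = of_nat (card K - 1)" using K01 fin by (simp add: card_Diff_singleton)
    also have "\<dots> = of_nat (card K) - 1" using Q2 by (simp add: of_nat_diff)
    also have "0 ^ i = (0::'r)" using True Q2 by simp
    finally show ?thesis using True Q0 by simp
  next
    case False
    show ?thesis
    proof (cases "i = 0")
      case True thus ?thesis using Q0 False by simp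
    next
      case i0: False
      have "i < card K - 1" using i False by linarith
      then obtain g where g: "g \<in> K" "g \<noteq> 0" "g ^ i \<noteq> 1"
        using field_facts(2)[OF csr fin comm, of i] i0 by auto
      have imgg: "(\<lambda>c. g * c) ` K = K"
        by (rule endo_inj_surj[OF fin]) (use g csrD(4)[OF csr] in \<open>auto intro: inj_onI\<close>)
      have "(\<Sum>c\<in>K. c ^ i) = (\<Sum>c\<in>(\<lambda>c. g * c) ` K. c ^ i)" using imgg by simp
      also have "\<dots> = (\<Sum>c\<in>K. (g * c) ^ i)" using g by (subst sum.reindex) (auto intro: inj_onI)
      also have "\<dots> = (\<Sum>c\<in>K. g ^ i * c ^ i)"
        using comm g by (intro sum.cong refl power_mult_commuting) auto
      also have "\<dots> = g ^ i * (\<Sum>c\<in>K. c ^ i)" by (simp add: sum_distrib_left)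
      finally have "(g ^ i - 1) * (\<Sum>c\<in>K. c ^ i) = 0" by (simp add: algebra_simps)
      hence "(\<Sum>c\<in>K. c ^ i) = 0" using g(3) by simp
      thus ?thesis using False by simp
    qed
  qed
qed

lemma herstein:
  fixes K :: "'r::division_ring set" and a b :: 'r
  assumes csr: "csr K" and fin: "finite K" and comm: "\<forall>x\<in>K. \<forall>y\<in>K. x * y = y * x"
    and aK: "a \<in> K" and ab: "a * b \<noteq> b * a"
  shows "\<exists>c\<in>K. c \<noteq> a \<and> (\<exists>z. z \<noteq> 0 \<and> z * a = c * z)"
proof (rule ccontr)
  assume "\<not> ?thesis"
  hence noeig: "z = 0" if "c \<in> K" "c \<noteq> a" "z * a = c * z" for c z using that by blast
  define Q where "Q = card K"
  have K01: "0 \<in> K" "1 \<in> K" using csrD(1,2)[OF csr] by auto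
  have Q2: "Q \<ge> 2"
  proof -
    have "card {0, 1::'r} \<le> card K" using K01 fin by (intro card_mono) auto
    thus ?thesis unfolding Q_def by simp
  qed
  have cQ: "c ^ Q = c" if "c \<in> K" for c
  proof (cases "c = 0")
    case True thus ?thesis using Q2 by simp
  next
    case False
    hence "c ^ (Q - 1) = 1" using field_facts(1)[OF csr fin comm] that unfolding Q_def by simp
    moreover have "c ^ Q = c ^ (Q - 1) * c" using Q2 by (metis Suc_diff_1 less_le_trans pos2 power_Suc2)
    ultimately show ?thesis by simp
  qed
  define U where "U c y = (\<Sum>j<Q. c ^ (Q - 1 - j) * y * a ^ j)" for c y
  have tele: "U c y * a - c * U c y = y * a - c * y" if c: "c \<in> K" for c y
  proof -
    define t where "t j = c ^ (Q - j) * y * a ^ j" for j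
    have "U c y * a = (\<Sum>j<Q. t (Suc j))"
      unfolding U_def t_def sum_distrib_right
        by (intro sum.cong refl) (simp only: power_Suc2 diff_Suc_eq_diff_pred mult.assoc)
    moreover have "c * U c y = (\<Sum>j<Q. t j)"
      unfolding U_def t_def sum_distrib_left
    proof (intro sum.cong refl)
      fix j assume "j \<in> {..<Q}"
      hence "Suc (Q - 1 - j) = Q - j" by simp
      hence "c * c ^ (Q - 1 - j) = c ^ (Q - j)" by (metis power_Suc)
      thus "c * (c ^ (Q - 1 - j) * y * a ^ j) = c ^ (Q - j) * y * a ^ j" by (simp add: mult.assoc[symmetric])
    qed
    ultimately have "U c y * a - c * U c y = (\<Sum>j<Q. t (Suc j) - t j)" by (simp add: sum_subtractf)
    also have "\<dots> = t Q - t 0" by (rule sum_lessThan_telescope)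
    also have "\<dots> = y * a - c * y" unfolding t_def using cQ[OF aK] cQ[OF c] by simp
    finally show ?thesis .
  qed
  have Ueq: "U c y = y" if c: "c \<in> K" "c \<noteq> a" for c y
  proof -
    have "(U c y - y) * a = c * (U c y - y)"
      using tele[OF c(1), of y] by (simp add: algebra_simps)
    hence "U c y - y = 0" using noeig[OF c] by blast
    thus ?thesis by simp
  qed
  have Q0: "of_nat Q = (0::'r)" using power_sums(1)[OF csr fin comm] unfolding Q_def .
  have psum: "(\<Sum>c\<in>K. c ^ i) = (if i = Q - 1 then - 1 else 0)" if "i < Q" for i
    using power_sums(2)[OF csr fin comm] that unfolding Q_def by blast
  have Ua0: "U a y = 0" for y
  proof -
    have "(\<Sum>c\<in>K - {a}. U c y) = (\<Sum>c\<in>K - {a}. y)" using Ueq by (intro sum.cong) auto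
    also have "\<dots> = of_nat (Q - 1) * y" using aK fin unfolding Q_def
      by (simp add: card_Diff_singleton of_nat_mult[symmetric])
    also have "\<dots> = - y" using Q0 Q2 by (simp add: of_nat_diff algebra_simps)
    finally have L: "(\<Sum>c\<in>K - {a}. U c y) = - y" .
    have "(\<Sum>c\<in>K - {a}. U c y) = (\<Sum>j<Q. (\<Sum>c\<in>K - {a}. c ^ (Q - 1 - j)) * y * a ^ j)"
      unfolding U_def by (subst sum.swap) (simp add: sum_distrib_right)
    also have "\<dots> = (\<Sum>j<Q. ((if j = 0 then - 1 else 0) - a ^ (Q - 1 - j)) * y * a ^ j)"
    proof (intro sum.cong refl)
      fix j assume j: "j \<in> {..<Q}"
      have "(\<Sum>c\<in>K - {a}. c ^ (Q - 1 - j)) = (\<Sum>c\<in>K. c ^ (Q - 1 - j)) - a ^ (Q - 1 - j)"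
        using aK fin by (simp add: sum_diff1)
      also have "(\<Sum>c\<in>K. c ^ (Q - 1 - j)) = (if j = 0 then - 1 else 0)"
        using psum[of "Q - 1 - j"] j Q2 by auto
      finally show "(\<Sum>c\<in>K - {a}. c ^ (Q - 1 - j)) * y * a ^ j = ((if j = 0 then - 1 else 0) - a ^ (Q - 1 - j)) * y * a ^ j"
        by simp
    qed
    also have "\<dots> = (\<Sum>j<Q. (if j = 0 then - y else 0) - a ^ (Q - 1 - j) * y * a ^ j)"
      by (intro sum.cong refl) (simp add: algebra_simps)
    also have "\<dots> = (\<Sum>j<Q. (if j = 0 then - y else 0)) - U a y"
      unfolding U_def by (simp only: sum_subtractf)
    also have "(\<Sum>j<Q. (if j = 0 then - y else 0)) = - y" using Q2 by (simp add: sum.delta)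
    finally show ?thesis using L by simp
  qed
  have "b * a - a * b = 0" using tele[OF aK, of b] Ua0[of b] by simp
  thus False using ab by simp
qed


lemma alg_props:
  fixes phi :: "'f::field \<Rightarrow> 'r::division_ring"
  assumes "is_algebra_map phi"
  shows "phi 1 = 1" "phi (a + b) = phi a + phi b" "phi (a * b) = phi a * phi b"
    "phi a * r = r * phi a" "phi 0 = 0" "phi (- a) = - phi a" "phi a = 0 \<longleftrightarrow> a = 0"
proof -
  show p1: "phi 1 = 1" and pa: "phi (a + b) = phi a + phi b" and pm: "phi (a * b) = phi a * phi b"
    and "phi a * r = r * phi a" using assms unfolding is_algebra_map_def by blast+
  have "phi (0 + 0) = phi 0 + phi 0" using assms unfolding is_algebra_map_def by blast
  thus p0: "phi 0 = 0" by simp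
  have "phi (a + - a) = phi a + phi (- a)" using assms unfolding is_algebra_map_def by blast
  hence "phi a + phi (- a) = 0" using p0 by simp
  thus "phi (- a) = - phi a" by (metis add.commute eq_neg_iff_add_eq_0)
  show "phi a = 0 \<longleftrightarrow> a = 0"
  proof
    assume a: "phi a = 0"
    show "a = 0"
    proof (rule ccontr)
      assume "a \<noteq> 0"
      hence "phi (a * inverse a) = 1" using p1 by simp
      moreover have "phi (a * inverse a) = phi a * phi (inverse a)"
        using assms unfolding is_algebra_map_def by blast
      ultimately show False using a by simp
    qed
  qed (simp add: p0)
qed

definition Kset :: "('f::field \<Rightarrow> 'r::division_ring) \<Rightarrow> nat \<Rightarrow> 'r \<Rightarrow> 'r set" where
  "Kset phi m a = {\<Sum>j<m. phi (f j) * a ^ j | f. True}"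

lemma comm_pow:
  fixes y a :: "'r::ring_1"
  assumes "y * a = a * y"
  shows "y * a ^ j = a ^ j * y"
proof (induction j)
  case (Suc j)
  have "y * a ^ Suc j = (y * a) * a ^ j" by (simp add: mult.assoc)
  also have "\<dots> = a * (y * a ^ j)" using assms by (simp add: mult.assoc)
  also have "\<dots> = a ^ Suc j * y" using Suc by (simp add: mult.assoc)
  finally show ?case .
qed simp

lemma conj_pow:
  fixes z a c :: "'r::ring_1"
  assumes "z * a = c * z"
  shows "z * a ^ j = c ^ j * z"
proof (induction j)
  case (Suc j)
  have "z * a ^ Suc j = (z * a) * a ^ j" by (simp add: mult.assoc power_commutes)
  also have "\<dots> = c * (z * a ^ j)" using assms by (simp add: mult.assoc)
  also have "\<dots> = c ^ Suc j * z" using Suc by (simp add: mult.assoc)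
  finally show ?case .
qed simp

locale vanish =
  fixes phi :: "'f::field \<Rightarrow> 'r::division_ring" and c :: "nat \<Rightarrow> 'f" and m :: nat
  assumes alg: "is_algebra_map phi" and finF: "finite (UNIV :: 'f set)" and cm: "c m \<noteq> 0"
    and van: "\<And>x. (\<Sum>j\<le>m. phi (c j) * x ^ j) = 0"
begin

lemmas A = alg_props[OF alg]

lemma m_pos: "m > 0"
proof (rule ccontr)
  assume "\<not> m > 0"
  hence "m = 0" by simp
  hence "phi (c 0) = 0" using van[of 0] by simp
  thus False using A(7) cm \<open>m = 0\<close> by simp
qed

lemma am: "a ^ m = (\<Sum>j<m. phi (- c j / c m) * a ^ j)"
proof -
  have "(\<Sum>j<m. phi (c j) * a ^ j) + phi (c m) * a ^ m = 0"
    using van[of a] by (simp add: lessThan_Suc_atMost[symmetric])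
  hence e: "phi (c m) * a ^ m = - (\<Sum>j<m. phi (c j) * a ^ j)" by (simp add: eq_neg_iff_add_eq_0 add.commute)
  have "phi (inverse (c m)) * phi (c m) = 1" using cm by (simp add: A(3)[symmetric] A(1))
  hence "a ^ m = phi (inverse (c m)) * (phi (c m) * a ^ m)" by (simp add: mult.assoc[symmetric])
  also have "\<dots> = (\<Sum>j<m. - (phi (inverse (c m)) * (phi (c j) * a ^ j)))"
    by (simp only: e sum_distrib_left mult_minus_right sum_negf)
  also have "\<dots> = (\<Sum>j<m. phi (- c j / c m) * a ^ j)"
  proof (intro sum.cong refl)
    fix j
    have "phi (- c j / c m) = - (phi (inverse (c m)) * phi (c j))"
      by (simp only: A(3)[symmetric] A(6)[symmetric] divide_inverse mult.commute minus_mult_left)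
    thus "- (phi (inverse (c m)) * (phi (c j) * a ^ j)) = phi (- c j / c m) * a ^ j"
      by (simp add: mult.assoc)
  qed
  finally show ?thesis .
qed

abbreviation K where "K a \<equiv> Kset phi m a"

lemma K_mem: "x \<in> K a \<longleftrightarrow> (\<exists>f. x = (\<Sum>j<m. phi (f j) * a ^ j))"
  unfolding Kset_def by auto

lemma K0: "0 \<in> K a"
  unfolding K_mem by (intro exI[of _ "\<lambda>_. 0"]) (simp add: A(5))

lemma Kadd: "x \<in> K a \<Longrightarrow> y \<in> K a \<Longrightarrow> x + y \<in> K a"
proof -
  assume "x \<in> K a" "y \<in> K a"
  then obtain f g where "x = (\<Sum>j<m. phi (f j) * a ^ j)" "y = (\<Sum>j<m. phi (g j) * a ^ j)"
    unfolding K_mem by blast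
  hence "x + y = (\<Sum>j<m. phi (f j + g j) * a ^ j)" by (simp add: A(2) distrib_right sum.distrib)
  thus ?thesis unfolding K_mem by (intro exI[of _ "\<lambda>j. f j + g j"])
qed

lemma Kphi: "x \<in> K a \<Longrightarrow> phi t * x \<in> K a"
proof -
  assume "x \<in> K a"
  then obtain f where "x = (\<Sum>j<m. phi (f j) * a ^ j)" unfolding K_mem by blast
  hence "phi t * x = (\<Sum>j<m. phi (t * f j) * a ^ j)" by (simp add: A(3) sum_distrib_left mult.assoc)
  thus ?thesis unfolding K_mem by (intro exI[of _ "\<lambda>j. t * f j"])
qed

lemma Kneg: "x \<in> K a \<Longrightarrow> - x \<in> K a"
  using Kphi[of x a "- 1"] by (simp add: A(6) A(1))

lemma Ksum: "finite I \<Longrightarrow> (\<And>i. i \<in> I \<Longrightarrow> g i \<in> K a) \<Longrightarrow> (\<Sum>i\<in>I. g i) \<in> K a"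
  by (induction I rule: finite_induct) (auto intro: K0 Kadd)

lemma Kpow_lt: "j < m \<Longrightarrow> a ^ j \<in> K a"
proof -
  assume j: "j < m"
  have "(\<Sum>i<m. phi (if i = j then 1 else 0) * a ^ i) = (\<Sum>i<m. if i = j then a ^ i else 0)"
    by (intro sum.cong refl) (simp add: A(1) A(5))
  also have "\<dots> = a ^ j" using j by simp
  finally show ?thesis unfolding K_mem by (intro exI[of _ "\<lambda>i. if i = j then 1 else 0"]) simp
qed

lemma Kpow_m: "a ^ m \<in> K a"
  unfolding K_mem using am[of a] by (intro exI[of _ "\<lambda>j. - c j / c m"])

lemma Ka: "x \<in> K a \<Longrightarrow> a * x \<in> K a"
proof -
  assume "x \<in> K a"
  then obtain f where f: "x = (\<Sum>j<m. phi (f j) * a ^ j)" unfolding K_mem by blast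
  have "a * x = (\<Sum>j<m. phi (f j) * a ^ Suc j)"
    unfolding f sum_distrib_left
  proof (intro sum.cong refl)
    fix j
    have "a * (phi (f j) * a ^ j) = (a * phi (f j)) * a ^ j" by (simp only: mult.assoc)
    also have "\<dots> = (phi (f j) * a) * a ^ j" by (simp only: A(4)[of "f j" a])
    also have "\<dots> = phi (f j) * a ^ Suc j" by (simp only: mult.assoc power_Suc)
    finally show "a * (phi (f j) * a ^ j) = phi (f j) * a ^ Suc j" .
  qed
  also have "\<dots> \<in> K a"
  proof (rule Ksum)
    fix j assume "j \<in> {..<m}"
    hence "Suc j < m \<or> Suc j = m" by auto
    hence "a ^ Suc j \<in> K a" using Kpow_lt Kpow_m by blast
    thus "phi (f j) * a ^ Suc j \<in> K a" by (rule Kphi)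
  qed simp
  finally show ?thesis .
qed

lemma Kpow: "a ^ j \<in> K a"
proof (induction j)
  case 0 thus ?case using Kpow_lt[of 0 a] m_pos by simp
next
  case (Suc j) thus ?case using Ka by simp
qed

lemma K1: "1 \<in> K a" using Kpow[of a 0] by simp

lemma KaK: "a \<in> K a" using Kpow[of a 1] by simp

lemma Kpowmul: "x \<in> K a \<Longrightarrow> a ^ j * x \<in> K a"
  by (induction j) (auto simp: mult.assoc intro: Ka)

lemma Kmul: "x \<in> K a \<Longrightarrow> y \<in> K a \<Longrightarrow> x * y \<in> K a"
proof -
  assume "x \<in> K a" "y \<in> K a"
  then obtain f where f: "x = (\<Sum>j<m. phi (f j) * a ^ j)" unfolding K_mem by blast
  have "x * y = (\<Sum>j<m. phi (f j) * (a ^ j * y))" unfolding f sum_distrib_right by (simp add: mult.assoc)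
  also have "\<dots> \<in> K a" using Kpowmul[OF \<open>y \<in> K a\<close>] by (intro Ksum Kphi) auto
  finally show ?thesis .
qed

lemma Kcomm_gen: "y * a = a * y \<Longrightarrow> x \<in> K a \<Longrightarrow> y * x = x * y"
proof -
  assume ya: "y * a = a * y" and "x \<in> K a"
  then obtain f where f: "x = (\<Sum>j<m. phi (f j) * a ^ j)" unfolding K_mem by blast
  show ?thesis unfolding f sum_distrib_left sum_distrib_right
  proof (intro sum.cong refl)
    fix j
    have "y * (phi (f j) * a ^ j) = (y * phi (f j)) * a ^ j" by (simp only: mult.assoc)
    also have "\<dots> = (phi (f j) * y) * a ^ j" using A(4)[of "f j" y] by simp
    also have "\<dots> = phi (f j) * (y * a ^ j)" by (simp only: mult.assoc)
    also have "\<dots> = phi (f j) * a ^ j * y" using comm_pow[OF ya] by (simp add: mult.assoc)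
    finally show "y * (phi (f j) * a ^ j) = phi (f j) * a ^ j * y" .
  qed
qed

lemma Kcomm: "x \<in> K a \<Longrightarrow> y \<in> K a \<Longrightarrow> x * y = y * x"
proof -
  assume x: "x \<in> K a" and y: "y \<in> K a"
  have "a * y = y * a" using Kcomm_gen[of a a y] y by simp
  hence "y * x = x * y" using Kcomm_gen[of y a x] x by simp
  thus ?thesis by simp
qed

lemma Kfin: "finite (K a)"
proof -
  have "K a \<subseteq> (\<lambda>f. \<Sum>j<m. phi (f j) * a ^ j) ` (PiE {..<m} (\<lambda>_. UNIV))"
  proof
    fix x assume "x \<in> K a"
    then obtain f where f: "x = (\<Sum>j<m. phi (f j) * a ^ j)" unfolding K_mem by blast
    have "x = (\<Sum>j<m. phi (restrict f {..<m} j) * a ^ j)" unfolding f by (intro sum.cong) auto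
    moreover have "restrict f {..<m} \<in> PiE {..<m} (\<lambda>_. UNIV)" by auto
    ultimately show "x \<in> (\<lambda>f. \<Sum>j<m. phi (f j) * a ^ j) ` (PiE {..<m} (\<lambda>_. UNIV))" by blast
  qed
  moreover have "finite (PiE {..<m} (\<lambda>_. UNIV :: 'f set))" using finF by (intro finite_PiE) auto
  ultimately show ?thesis using finite_subset by blast
qed

lemma Kcsr: "csr (K a)"
  unfolding csr_def using K0 K1 Kadd Kmul Kneg by blast

lemma Kconj:
  assumes "z * a = y * z" "y \<in> K a" "x \<in> K a"
  shows "\<exists>x'\<in>K a. z * x = x' * z"
proof -
  obtain f where f: "x = (\<Sum>j<m. phi (f j) * a ^ j)" using assms(3) unfolding K_mem by blast
  have "z * x = (\<Sum>j<m. phi (f j) * y ^ j) * z"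
    unfolding f sum_distrib_left sum_distrib_right
  proof (intro sum.cong refl)
    fix j
    have "z * (phi (f j) * a ^ j) = (z * phi (f j)) * a ^ j" by (simp only: mult.assoc)
    also have "\<dots> = (phi (f j) * z) * a ^ j" using A(4)[of "f j" z] by simp
    also have "\<dots> = phi (f j) * (z * a ^ j)" by (simp only: mult.assoc)
    also have "\<dots> = phi (f j) * y ^ j * z" using conj_pow[OF assms(1)] by (simp add: mult.assoc)
    finally show "z * (phi (f j) * a ^ j) = phi (f j) * y ^ j * z" .
  qed
  moreover have "(\<Sum>j<m. phi (f j) * y ^ j) \<in> K a"
  proof -
    have "y ^ j \<in> K a" for j
      by (induction j) (simp_all add: K1 Kmul assms(2))
    thus ?thesis by (intro Ksum Kphi) auto
  qed
  ultimately show ?thesis by blast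
qed

lemma torsion:
  fixes z :: 'r
  assumes "z \<noteq> 0"
  shows "\<exists>e>0. z ^ e = 1"
proof -
  have "range (\<lambda>j::nat. z ^ j) \<subseteq> K z" using Kpow by auto
  hence "finite (range (\<lambda>j::nat. z ^ j))" using Kfin finite_subset by blast
  hence "\<not> inj (\<lambda>j::nat. z ^ j)" using finite_imageD by blast
  then obtain i j :: nat where ij: "i \<noteq> j" "z ^ i = z ^ j" unfolding inj_on_def by blast
  have main: "\<exists>e>0. z ^ e = 1" if "i < j" "z ^ i = z ^ j" for i j :: nat
  proof -
    have "z ^ i * z ^ (j - i) = z ^ (i + (j - i))" by (rule power_add[symmetric])
    also have "i + (j - i) = j" using that(1) by simp
    finally have "z ^ i * 1 = z ^ i * z ^ (j - i)" using that(2) by simp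
    hence "z ^ (j - i) = 1" using assms by (metis mult_cancel_left power_eq_0_iff)
    thus ?thesis using that by (intro exI[of _ "j - i"]) auto
  qed
  show ?thesis
  proof (cases "i < j")
    case True thus ?thesis using main ij by blast
  next
    case False thus ?thesis using main[of j i] ij by auto
  qed
qed


lemma commutative:
  fixes x y :: 'r
  shows "x * y = y * x"
proof (rule ccontr)
  assume nc: "x * y \<noteq> y * x"
  have Kc: "\<forall>u\<in>K x. \<forall>v\<in>K x. u * v = v * u" using Kcomm by blast
  obtain cc where cc: "cc \<in> K x" "cc \<noteq> x" and "\<exists>z. z \<noteq> 0 \<and> z * x = cc * z"
    using herstein[OF Kcsr Kfin Kc KaK nc] by blast
  then obtain z where z: "z \<noteq> 0" "z * x = cc * z" by blast
  obtain e where e: "e > 0" "z ^ e = 1" using torsion[OF z(1)] by blast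
  have zmod: "z ^ l = z ^ (l mod e)" for l
  proof -
    have "z ^ l = z ^ (e * (l div e) + l mod e)" by simp
    also have "\<dots> = (z ^ e) ^ (l div e) * z ^ (l mod e)" by (simp only: power_add power_mult)
    also have "\<dots> = z ^ (l mod e)" using e by simp
    finally show ?thesis .
  qed
  have conj_iter: "\<exists>k'\<in>K x. z ^ i * k = k' * z ^ i" if "k \<in> K x" for i k
    using that
  proof (induction i arbitrary: k)
    case 0 thus ?case by auto
  next
    case (Suc i)
    obtain k' where k': "k' \<in> K x" "z ^ i * k = k' * z ^ i" using Suc by blast
    obtain k'' where k'': "k'' \<in> K x" "z * k' = k'' * z" using Kconj[OF z(2) cc(1) k'(1)] by blast
    have "z ^ Suc i * k = z * (z ^ i * k)" by (simp add: mult.assoc)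
    also have "\<dots> = (z * k') * z ^ i" using k'(2) by (simp add: mult.assoc)
    also have "\<dots> = k'' * z ^ Suc i" using k''(2) by (simp add: mult.assoc)
    finally show ?case using k''(1) by blast
  qed
  define S where "S = {\<Sum>j<e. g j * z ^ j | g. \<forall>j. g j \<in> K x}"
  have S_mem: "s \<in> S \<longleftrightarrow> (\<exists>g. (\<forall>j. g j \<in> K x) \<and> s = (\<Sum>j<e. g j * z ^ j))" for s
    unfolding S_def by blast
  have single: "k * z ^ l \<in> S" if k: "k \<in> K x" for k l
  proof -
    define g where "g j = (if j = l mod e then k else 0)" for j
    have gK: "\<forall>j. g j \<in> K x" unfolding g_def using k K0 by auto
    have "(\<Sum>j<e. g j * z ^ j) = (\<Sum>j<e. if j = l mod e then k * z ^ j else 0)"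
      unfolding g_def by (intro sum.cong refl) auto
    also have "\<dots> = k * z ^ (l mod e)" using e(1) by simp
    also have "\<dots> = k * z ^ l" using zmod[of l] by simp
    finally show ?thesis unfolding S_mem using gK by metis
  qed
  have S0: "0 \<in> S" using single[OF K0, of 0] by simp
  have Sadd: "s + t \<in> S" if st: "s \<in> S" "t \<in> S" for s t
  proof -
    obtain g where g: "\<forall>j. g j \<in> K x" "s = (\<Sum>j<e. g j * z ^ j)"
      using st(1) unfolding S_mem by blast
    obtain h where h: "\<forall>j. h j \<in> K x" "t = (\<Sum>j<e. h j * z ^ j)"
      using st(2) unfolding S_mem by blast
    note gh = g(1) h(1) g(2) h(2)
    have "s + t = (\<Sum>j<e. (g j + h j) * z ^ j)" unfolding gh by (simp add: sum.distrib distrib_right)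
    moreover have "\<forall>j. g j + h j \<in> K x" using gh Kadd by blast
    ultimately show ?thesis unfolding S_mem by (intro exI[of _ "\<lambda>j. g j + h j"]) simp
  qed
  have Sneg: "- s \<in> S" if s: "s \<in> S" for s
  proof -
    obtain g where g: "\<forall>j. g j \<in> K x" "s = (\<Sum>j<e. g j * z ^ j)" using s unfolding S_mem by blast
    have "- s = (\<Sum>j<e. (- g j) * z ^ j)" unfolding g by (simp add: sum_negf)
    moreover have "\<forall>j. - g j \<in> K x" using g Kneg by blast
    ultimately show ?thesis unfolding S_mem by (intro exI[of _ "\<lambda>j. - g j"]) simp
  qed
  have Ssum: "finite I \<Longrightarrow> (\<And>i. i \<in> I \<Longrightarrow> h i \<in> S) \<Longrightarrow> (\<Sum>i\<in>I. h i) \<in> S" for I and h :: "nat \<Rightarrow> 'r"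
    by (induction I rule: finite_induct) (auto intro: S0 Sadd)
  have Smul: "s * t \<in> S" if st: "s \<in> S" "t \<in> S" for s t
  proof -
    obtain g where g: "\<forall>j. g j \<in> K x" "s = (\<Sum>j<e. g j * z ^ j)"
      using st(1) unfolding S_mem by blast
    obtain h where h: "\<forall>j. h j \<in> K x" "t = (\<Sum>j<e. h j * z ^ j)"
      using st(2) unfolding S_mem by blast
    note gh = g(1) h(1) g(2) h(2)
    have "s * t = (\<Sum>i<e. \<Sum>j<e. (g i * z ^ i) * (h j * z ^ j))" unfolding gh by (rule sum_product)
    also have "\<dots> \<in> S"
    proof (intro Ssum finite_lessThan)
      fix i j
      obtain k' where k': "k' \<in> K x" "z ^ i * h j = k' * z ^ i" using conj_iter gh(2) by blast
      have "(g i * z ^ i) * (h j * z ^ j) = g i * (z ^ i * h j) * z ^ j" by (simp add: mult.assoc)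
      also have "\<dots> = (g i * k') * z ^ (i + j)" using k'(2) by (simp add: mult.assoc power_add)
      finally show "(g i * z ^ i) * (h j * z ^ j) \<in> S" using single[OF Kmul[OF _ k'(1)]] gh(1) by metis
    qed
    finally show ?thesis .
  qed
  have finS: "finite S"
  proof -
    have "S \<subseteq> (\<lambda>g. \<Sum>j<e. g j * z ^ j) ` (PiE {..<e} (\<lambda>_. K x))"
    proof
      fix s assume "s \<in> S"
      then obtain g where g: "\<forall>j. g j \<in> K x" "s = (\<Sum>j<e. g j * z ^ j)" unfolding S_mem by blast
      have "s = (\<Sum>j<e. restrict g {..<e} j * z ^ j)" unfolding g by (intro sum.cong) auto
      moreover have "restrict g {..<e} \<in> PiE {..<e} (\<lambda>_. K x)" using g by auto
      ultimately show "s \<in> (\<lambda>g. \<Sum>j<e. g j * z ^ j) ` (PiE {..<e} (\<lambda>_. K x))" by blast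
    qed
    moreover have "finite (PiE {..<e} (\<lambda>_. K x))" using Kfin by (intro finite_PiE) auto
    ultimately show ?thesis using finite_subset by blast
  qed
  have csrS: "csr S"
  proof -
    have "1 \<in> S" using single[OF K1, of 0] by simp
    thus ?thesis unfolding csr_def using S0 Sadd Smul Sneg by blast
  qed
  have xS: "x \<in> S" using single[OF KaK, of 0] by simp
  have zS: "z \<in> S" using single[OF K1, of 1] by simp
  have "x * z = z * x" using wedderburn_sub[OF csrS finS] xS zS by blast
  hence "x * z = cc * z" using z(2) by simp
  hence "x = cc" using z(1) by simp
  thus False using cc(2) by simp
qed

end


lemma sum_list_upt_lessThan: "sum_list (map f [0..<k]) = (\<Sum>i<k. f i)"
  by (induction k) (auto simp: lessThan_Suc add.commute)

lemma trace_smult_add: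
  fixes Y M :: "'r::ring_1 mat"
  assumes "Y \<in> carrier_mat n n" "M \<in> carrier_mat n n"
  shows "mat_trace (a \<cdot>\<^sub>m Y + M) = a * mat_trace Y + mat_trace M"
  using assms unfolding mat_trace_def by (simp add: sum_distrib_left sum.distrib)

lemma trace_minus:
  fixes Y M :: "'r::ring_1 mat"
  assumes "Y \<in> carrier_mat n n" "M \<in> carrier_mat n n"
  shows "mat_trace (Y - M) = mat_trace Y - mat_trace M"
  using assms unfolding mat_trace_def by (simp add: sum_subtractf)

lemma foldr_trace:
  fixes X :: "'r::ring_1 mat"
  assumes X: "X \<in> carrier_mat n n"
  shows "foldr (\<lambda>i M. F i \<cdot>\<^sub>m (X ^\<^sub>m i) + M) ks (0\<^sub>m n n) \<in> carrier_mat n n \<and>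
         mat_trace (foldr (\<lambda>i M. F i \<cdot>\<^sub>m (X ^\<^sub>m i) + M) ks (0\<^sub>m n n)) = sum_list (map (\<lambda>i. F i * mat_trace (X ^\<^sub>m i)) ks)"
proof (induction ks)
  case Nil thus ?case by (simp add: mat_trace_def)
next
  case (Cons i ks)
  have c: "foldr (\<lambda>i M. F i \<cdot>\<^sub>m (X ^\<^sub>m i) + M) ks (0\<^sub>m n n) \<in> carrier_mat n n" using Cons by simp
  have "mat_trace (F i \<cdot>\<^sub>m (X ^\<^sub>m i) + foldr (\<lambda>i M. F i \<cdot>\<^sub>m (X ^\<^sub>m i) + M) ks (0\<^sub>m n n))
    = F i * mat_trace (X ^\<^sub>m i) + mat_trace (foldr (\<lambda>i M. F i \<cdot>\<^sub>m (X ^\<^sub>m i) + M) ks (0\<^sub>m n n))"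
    by (rule trace_smult_add[OF pow_carrier_mat[OF X] c])
  thus ?case using Cons c X by simp
qed

lemma poly_mat_trace:
  fixes X :: "'r::division_ring mat" and phi :: "'f::field \<Rightarrow> 'r"
  assumes X: "X \<in> carrier_mat n n"
  shows "poly_mat phi p X \<in> carrier_mat n n"
    "mat_trace (poly_mat phi p X) = (\<Sum>i<Suc (degree p). phi (poly.coeff p i) * mat_trace (X ^\<^sub>m i))"
proof -
  have d: "dim_row X = n" "dim_col X = n" using X by auto
  note f = foldr_trace[OF X, of "\<lambda>i. phi (poly.coeff p i)" "[0..<Suc (degree p)]"]
  show "poly_mat phi p X \<in> carrier_mat n n" using f unfolding poly_mat_def d by simp
  show "mat_trace (poly_mat phi p X) = (\<Sum>i<Suc (degree p). phi (poly.coeff p i) * mat_trace (X ^\<^sub>m i))"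
    using f unfolding poly_mat_def d by (simp add: sum_list_upt_lessThan)
qed

definition Emat :: "nat \<Rightarrow> 'r::ring_1 \<Rightarrow> 'r mat" where
  "Emat n t = mat n n (\<lambda>(i, k). if i = 0 \<and> k = 0 then t else 0)"

definition Rmat :: "nat \<Rightarrow> (nat \<Rightarrow> 'r::ring_1) \<Rightarrow> (nat \<Rightarrow> 'r) \<Rightarrow> 'r \<Rightarrow> 'r mat" where
  "Rmat n \<beta> \<alpha> w = mat n n (\<lambda>(i, k). \<beta> i * w * \<alpha> k)"

lemma Emat_mult:
  assumes "n > 0"
  shows "Emat n t * Emat n u = Emat n (t * u)"
proof (rule eq_matI)
  fix i j assume ij: "i < dim_row (Emat n (t * u))" "j < dim_col (Emat n (t * u))"
  hence ij': "i < n" "j < n" by (simp_all add: Emat_def)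
  have "(Emat n t * Emat n u) $$ (i, j) = (\<Sum>l<n. (if i = 0 \<and> l = 0 then t else 0) * (if l = 0 \<and> j = 0 then u else 0))"
    using ij' by (simp add: Emat_def scalar_prod_def atLeast0LessThan)
  also have "\<dots> = (\<Sum>l<n. if l = 0 then (if i = 0 \<and> j = 0 then t * u else 0) else 0)"
    by (intro sum.cong refl) auto
  also have "\<dots> = (if i = 0 \<and> j = 0 then t * u else 0)" using assms by simp
  finally show "(Emat n t * Emat n u) $$ (i, j) = Emat n (t * u) $$ (i, j)" using ij' by (simp add: Emat_def)
qed (simp_all add: Emat_def)

lemma Rmat_mult:
  "Rmat n \<beta> \<alpha> w * Rmat n \<beta> \<alpha> v = Rmat n \<beta> \<alpha> (w * (\<Sum>l<n. \<alpha> l * \<beta> l) * v)"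
proof (rule eq_matI)
  fix i j assume ij: "i < dim_row (Rmat n \<beta> \<alpha> (w * (\<Sum>l<n. \<alpha> l * \<beta> l) * v))" "j < dim_col (Rmat n \<beta> \<alpha> (w * (\<Sum>l<n. \<alpha> l * \<beta> l) * v))"
  hence ij': "i < n" "j < n" by (simp_all add: Rmat_def)
  have "(Rmat n \<beta> \<alpha> w * Rmat n \<beta> \<alpha> v) $$ (i, j) = (\<Sum>l<n. (\<beta> i * w * \<alpha> l) * (\<beta> l * v * \<alpha> j))"
    using ij' by (simp add: Rmat_def scalar_prod_def atLeast0LessThan)
  also have "\<dots> = \<beta> i * (w * (\<Sum>l<n. \<alpha> l * \<beta> l) * v) * \<alpha> j"
    by (simp add: sum_distrib_left sum_distrib_right mult.assoc)
  finally show "(Rmat n \<beta> \<alpha> w * Rmat n \<beta> \<alpha> v) $$ (i, j) = Rmat n \<beta> \<alpha> (w * (\<Sum>l<n. \<alpha> l * \<beta> l) * v) $$ (i, j)"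
    using ij' by (simp add: Rmat_def)
qed (simp_all add: Rmat_def)

lemma Emat_pow:
  assumes "n > 0"
  shows "Emat n t ^\<^sub>m Suc k = Emat n (t ^ Suc k)"
proof (induction k)
  case 0
  have "Emat n t \<in> carrier_mat n n" by (simp add: Emat_def)
  thus ?case by simp
next
  case (Suc k)
  have "Emat n t ^\<^sub>m Suc (Suc k) = Emat n (t ^ Suc k) * Emat n t" using Suc by simp
  also have "\<dots> = Emat n (t ^ Suc k * t)" by (rule Emat_mult[OF assms])
  also have "t ^ Suc k * t = t ^ Suc (Suc k)" by (simp only: power_Suc2)
  finally show ?case .
qed

lemma Rmat_pow:
  "Rmat n \<beta> \<alpha> 1 ^\<^sub>m Suc k = Rmat n \<beta> \<alpha> ((\<Sum>l<n. \<alpha> l * \<beta> l) ^ k)"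
proof (induction k)
  case 0
  have "Rmat n \<beta> \<alpha> 1 \<in> carrier_mat n n" by (simp add: Rmat_def)
  thus ?case by simp
next
  case (Suc k)
  have "Rmat n \<beta> \<alpha> 1 ^\<^sub>m Suc (Suc k) = Rmat n \<beta> \<alpha> ((\<Sum>l<n. \<alpha> l * \<beta> l) ^ k) * Rmat n \<beta> \<alpha> 1"
    using Suc by simp
  also have "\<dots> = Rmat n \<beta> \<alpha> ((\<Sum>l<n. \<alpha> l * \<beta> l) ^ k * (\<Sum>l<n. \<alpha> l * \<beta> l) * 1)" by (rule Rmat_mult)
  also have "(\<Sum>l<n. \<alpha> l * \<beta> l) ^ k * (\<Sum>l<n. \<alpha> l * \<beta> l) * 1 = (\<Sum>l<n. \<alpha> l * \<beta> l) ^ Suc k"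
    by (simp only: mult_1_right power_Suc2)
  finally show ?case .
qed

lemma trace_Emat: "n > 0 \<Longrightarrow> mat_trace (Emat n t) = t"
  unfolding mat_trace_def Emat_def by simp

lemma trace_Rmat: "mat_trace (Rmat n \<beta> \<alpha> w) = (\<Sum>l<n. \<beta> l * w * \<alpha> l)"
  unfolding mat_trace_def Rmat_def by simp


lemma phi_sum:
  fixes phi :: "'f::field \<Rightarrow> 'r::division_ring"
  assumes alg: "is_algebra_map phi" and "finite I"
  shows "phi (\<Sum>i\<in>I. g i) = (\<Sum>i\<in>I. phi (g i))"
  using assms(2) by (induction I rule: finite_induct) (simp_all add: alg_props[OF alg])

lemma phi_pow:
  fixes phi :: "'f::field \<Rightarrow> 'r::division_ring"
  assumes alg: "is_algebra_map phi"
  shows "phi (f ^ j) = phi f ^ j"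
  by (induction j) (simp_all add: alg_props[OF alg])

lemma nonvanishing:
  fixes phi :: "'f::field \<Rightarrow> 'r::division_ring" and c :: "nat \<Rightarrow> 'f"
  assumes alg: "is_algebra_map phi" and nc: "\<exists>a b :: 'r. a * b \<noteq> b * a" and cm: "c m \<noteq> 0"
  shows "\<exists>x. (\<Sum>j\<le>m. phi (c j) * x ^ j) \<noteq> 0"
proof (cases "finite (UNIV :: 'f set)")
  case True
  show ?thesis
  proof (rule ccontr)
    assume "\<not> ?thesis"
    hence "vanish phi c m" using alg True cm by (unfold_locales) auto
    hence "\<forall>a b :: 'r. a * b = b * a" using vanish.commutative by blast
    thus False using nc by blast
  qed
next
  case False
  define h where "h = (\<Sum>j\<le>m. Polynomial.monom (c j) j)"
  have "poly.coeff h m = c m" unfolding h_def by (simp add: coeff_sum coeff_monom)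
  hence "h \<noteq> 0" using cm by auto
  hence "finite {f. poly h f = 0}" by (rule poly_roots_finite)
  then obtain f where f: "f \<notin> {f. poly h f = 0}" using ex_new_if_finite[OF False] by blast
  have "(\<Sum>j\<le>m. phi (c j) * phi f ^ j) = phi (poly h f)"
    unfolding h_def poly_sum by (simp add: phi_sum[OF alg] poly_monom alg_props(3)[OF alg] phi_pow[OF alg])
  also have "\<dots> \<noteq> 0" using f alg_props(7)[OF alg] by simp
  finally show ?thesis by blast
qed

lemma sum_two:
  fixes f :: "nat \<Rightarrow> 'a::comm_monoid_add"
  assumes "n \<ge> 2" "\<And>l. l \<ge> 2 \<Longrightarrow> f l = 0"
  shows "(\<Sum>l<n. f l) = f 0 + f 1"
proof -
  have "(\<Sum>l<n. f l) = (\<Sum>l\<in>{0, 1}. f l)"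
    using assms by (intro sum.mono_neutral_right) auto
  thus ?thesis by simp
qed

theorem theorem3p1:
  fixes \<phi> :: "'f::field \<Rightarrow> 'r::division_ring"
    and n :: nat
    and p :: "'f poly"
  assumes "is_algebra_map \<phi>"
    and "\<exists>a b :: 'r. a * b \<noteq> b * a"
    and "n \<ge> 2"
    and "degree p \<ge> 1"
  shows "\<exists>A \<in> carrier_mat n n. \<exists>B \<in> carrier_mat n n.
           mat_trace (poly_mat \<phi> p (A * B) - poly_mat \<phi> p (B * A)) \<noteq> 0"
proof -
  note alg = assms(1)
  note Ap = alg_props[OF alg]
  define d where "d = degree p"
  define m where "m = d - 1"
  have dm: "d = Suc m" unfolding m_def d_def using assms(4) by simp
  define c where "c j = poly.coeff p (Suc j)" for j
  have "p \<noteq> 0" using assms(4) by auto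
  hence cm: "c m \<noteq> 0" unfolding c_def using dm unfolding d_def by (metis leading_coeff_neq_0)
  obtain x where wx: "(\<Sum>j\<le>m. \<phi> (c j) * x ^ j) \<noteq> 0" using nonvanishing[of \<phi> c m, OF alg assms(2) cm] by blast
  define w where "w = (\<Sum>j\<le>m. \<phi> (c j) * x ^ j)"
  have wnz: "w \<noteq> 0" using wx unfolding w_def .
  obtain u v :: 'r where uv: "u * v \<noteq> v * u" using assms(2) by blast
  define \<alpha> :: "nat \<Rightarrow> 'r" where "\<alpha> l = (if l = 0 then 1 else if l = 1 then u else 0)" for l
  define \<beta> :: "nat \<Rightarrow> 'r" where "\<beta> l = (if l = 0 then x - u * (v * inverse w) else if l = 1 then v * inverse w else 0)" for l
  define A where "A = mat n n (\<lambda>(i, j). if i = 0 then \<alpha> j else 0)"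
  define B where "B = mat n n (\<lambda>(i, j). if j = 0 then \<beta> i else 0)"
  have n0: "n > 0" using assms(3) by simp
  have AC: "A \<in> carrier_mat n n" and BC: "B \<in> carrier_mat n n" unfolding A_def B_def by simp_all
  define s where "s = (\<Sum>l<n. \<alpha> l * \<beta> l)"
  have sx: "s = x" unfolding s_def using assms(3)
    by (subst sum_two) (simp_all add: \<alpha>_def \<beta>_def mult.assoc)
  have AB: "A * B = Emat n s"
  proof (rule eq_matI)
    fix i j assume "i < dim_row (Emat n s)" "j < dim_col (Emat n s)"
    hence ij: "i < n" "j < n" by (simp_all add: Emat_def)
    have "(A * B) $$ (i, j) = (\<Sum>l<n. (if i = 0 then \<alpha> l else 0) * (if j = 0 then \<beta> l else 0))"
      using ij by (simp add: A_def B_def scalar_prod_def atLeast0LessThan)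
    also have "\<dots> = (if i = 0 \<and> j = 0 then s else 0)" unfolding s_def by simp
    finally show "(A * B) $$ (i, j) = Emat n s $$ (i, j)" using ij by (simp add: Emat_def)
  qed (simp_all add: A_def B_def Emat_def)
  have BA: "B * A = Rmat n \<beta> \<alpha> 1"
  proof (rule eq_matI)
    fix i j assume "i < dim_row (Rmat n \<beta> \<alpha> 1)" "j < dim_col (Rmat n \<beta> \<alpha> 1)"
    hence ij: "i < n" "j < n" by (simp_all add: Rmat_def)
    have "(B * A) $$ (i, j) = (\<Sum>l<n. (if l = 0 then \<beta> i else 0) * (if l = 0 then \<alpha> j else 0))"
      using ij by (simp add: A_def B_def scalar_prod_def atLeast0LessThan)
    also have "\<dots> = \<beta> i * \<alpha> j" using n0 by (simp add: if_distrib cong: if_cong)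
    finally show "(B * A) $$ (i, j) = Rmat n \<beta> \<alpha> 1 $$ (i, j)" using ij by (simp add: Rmat_def)
  qed (simp_all add: A_def B_def Rmat_def)
  have ABC: "A * B \<in> carrier_mat n n" and BAC: "B * A \<in> carrier_mat n n" using AC BC by simp_all
  have tr1: "mat_trace (X ^\<^sub>m 0) = of_nat n" if "X \<in> carrier_mat n n" for X :: "'r mat"
    using that unfolding mat_trace_def by simp
  have trAB: "mat_trace ((A * B) ^\<^sub>m Suc j) = x ^ Suc j" for j
    unfolding AB Emat_pow[OF n0] trace_Emat[OF n0] sx by (rule refl)
  have trBA: "mat_trace ((B * A) ^\<^sub>m Suc j) = (\<Sum>l<n. \<beta> l * x ^ j * \<alpha> l)" for j
    unfolding BA Rmat_pow trace_Rmat using sx unfolding s_def by simp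
  have "mat_trace (poly_mat \<phi> p (A * B) - poly_mat \<phi> p (B * A))
      = mat_trace (poly_mat \<phi> p (A * B)) - mat_trace (poly_mat \<phi> p (B * A))"
    by (rule trace_minus[OF poly_mat_trace(1)[OF ABC] poly_mat_trace(1)[OF BAC]])
  also have "\<dots> = (\<Sum>j<d. \<phi> (c j) * x ^ Suc j) - (\<Sum>j<d. \<phi> (c j) * (\<Sum>l<n. \<beta> l * x ^ j * \<alpha> l))"
    unfolding poly_mat_trace(2)[OF ABC] poly_mat_trace(2)[OF BAC] d_def[symmetric]
    by (simp only: sum.lessThan_Suc_shift tr1[OF ABC] tr1[OF BAC] trAB trBA c_def[symmetric]) simp
  also have "(\<Sum>j<d. \<phi> (c j) * x ^ Suc j) = w * x"
    unfolding w_def dm lessThan_Suc_atMost sum_distrib_right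
    by (intro sum.cong refl) (simp add: mult.assoc power_commutes)
  also have "(\<Sum>j<d. \<phi> (c j) * (\<Sum>l<n. \<beta> l * x ^ j * \<alpha> l)) = (\<Sum>l<n. \<beta> l * w * \<alpha> l)"
  proof -
    have "(\<Sum>j<d. \<phi> (c j) * (\<Sum>l<n. \<beta> l * x ^ j * \<alpha> l)) = (\<Sum>j<d. \<Sum>l<n. \<beta> l * (\<phi> (c j) * x ^ j) * \<alpha> l)"
      unfolding sum_distrib_left
    proof (intro sum.cong refl)
      fix j l
      have "\<phi> (c j) * (\<beta> l * x ^ j * \<alpha> l) = (\<phi> (c j) * \<beta> l) * x ^ j * \<alpha> l" by (simp only: mult.assoc)
      also have "\<dots> = (\<beta> l * \<phi> (c j)) * x ^ j * \<alpha> l" using Ap(4)[of "c j" "\<beta> l"] by simp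
      also have "\<dots> = \<beta> l * (\<phi> (c j) * x ^ j) * \<alpha> l" by (simp only: mult.assoc)
      finally show "\<phi> (c j) * (\<beta> l * x ^ j * \<alpha> l) = \<beta> l * (\<phi> (c j) * x ^ j) * \<alpha> l" .
    qed
    also have "\<dots> = (\<Sum>l<n. \<beta> l * w * \<alpha> l)"
      unfolding w_def dm lessThan_Suc_atMost sum_distrib_left sum_distrib_right
      by (subst sum.swap) simp
    finally show ?thesis .
  qed
  also have "(\<Sum>l<n. \<beta> l * w * \<alpha> l) = \<beta> 0 * w * \<alpha> 0 + \<beta> 1 * w * \<alpha> 1"
    using assms(3) by (intro sum_two) (simp_all add: \<alpha>_def \<beta>_def)
  also have "x * w = w * x"
    unfolding w_def sum_distrib_left sum_distrib_right
  proof (intro sum.cong refl)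
    fix j
    have "x * (\<phi> (c j) * x ^ j) = (x * \<phi> (c j)) * x ^ j" by (simp only: mult.assoc)
    also have "\<dots> = (\<phi> (c j) * x) * x ^ j" using Ap(4)[of "c j" x] by simp
    also have "\<dots> = \<phi> (c j) * x ^ j * x" by (simp add: mult.assoc power_commutes)
    finally show "x * (\<phi> (c j) * x ^ j) = \<phi> (c j) * x ^ j * x" .
  qed
  hence "w * x - (\<beta> 0 * w * \<alpha> 0 + \<beta> 1 * w * \<alpha> 1) = u * v - v * u"
    using wnz by (simp add: \<alpha>_def \<beta>_def algebra_simps mult.assoc)
  finally have "mat_trace (poly_mat \<phi> p (A * B) - poly_mat \<phi> p (B * A)) = u * v - v * u" .
  hence "mat_trace (poly_mat \<phi> p (A * B) - poly_mat \<phi> p (B * A)) \<noteq> 0" using uv by simp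
  thus ?thesis using AC BC by blast
qed


end
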